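(* Let $q>1$, $T>0$, $\Xi=[-1,1]\times\mathbb R$, and let $\ell:\Xi\times[0,T]\to\mathbb R$ and $g:\Xi\to\mathbb R$ be bounded continuous functions. For $t\in[0,T)$ and $(x,v)\in\Xi^{\rm ad}=[-1,1)\times[0,+\infty)\cup(-1,1]\times(-\infty,0]$, let $$u(t,x,v)=\inf\Big\{\int_t^T\Big(\ell(\xi(s),\xi'(s),s)+\frac1q|\xi''(s)|^q\Big)ds+g(\xi(T),\xi'(T))\Big\},$$ the infimum being over all $\xi\in W^{2,q}(t,T)$ with $\xi(t)=x$, $\xi'(t)=v$ and $\xi(s)\in[-1,1]$ for all $s\in[t,T]$. Fix $t\in[0,T)$. \begin{enumerate} \item As $x\to1_-$ and $v>0$ with $\frac{v^{2q-1}}{(1-x)^{q-1}}\to\infty$, $$u(t,x,v)\sim\frac{q^{q-1}}{(2q-1)^q}\frac{v^{2q-1}}{(1-x)^{q-1}}.$$ \item Fix $C>0$. If $x\to1_-$ and $v>0$ with $\frac{v^{2q-1}}{(1-x)^{q-1}}<C$ and $\frac{v(T-t)}{1-x}\to+\infty$, then $$u(t,x,v)\le\frac{q^{q-1}}{(2q-1)^q}\frac{v^{2q-1}}{(1-x)^{q-1}}+u(t,1,0)+o(1),$$ where $o(1)$ denotes a quantity tending to $0$. \end{enumerate} *)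

theory Defs
  imports "HOL-Analysis.Analysis" "HOL-Library.Landau_Symbols"
begin

definition Xi :: "(real \<times> real) set" where
  "Xi = {-1..1} \<times> (UNIV :: real set)"

text \<open>One-dimensional \<open>W^{2,q}(t,T)\<close>: \<open>\<xi>\<close> is differentiable on \<open>[t,T]\<close> with derivative
  \<open>d\<xi>\<close>, and \<open>d\<xi>\<close> is absolutely continuous with a.e. derivative \<open>a \<in> L^q(t,T)\<close>, i.e.
  \<open>d\<xi>(s) = d\<xi>(t) + \<integral>_t^s a\<close>.  (Here \<open>\<xi>\<close> is the continuous representative.)\<close>
definition W2q_traj ::
  "real \<Rightarrow> real \<Rightarrow> real \<Rightarrow> (real \<Rightarrow> real) \<Rightarrow> (real \<Rightarrow> real) \<Rightarrow> (real \<Rightarrow> real) \<Rightarrow> bool" where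
  "W2q_traj q t T \<xi> d\<xi> a \<longleftrightarrow>
     set_integrable lborel {t..T} a \<and>
     set_integrable lborel {t..T} (\<lambda>s. \<bar>a s\<bar> powr q) \<and>
     (\<forall>s\<in>{t..T}. (\<xi> has_real_derivative d\<xi> s) (at s within {t..T})) \<and>
     (\<forall>s\<in>{t..T}. d\<xi> s = d\<xi> t + (LINT r:{t..s}|lborel. a r))"

definition cost ::
  "real \<Rightarrow> (real \<Rightarrow> real \<Rightarrow> real \<Rightarrow> real) \<Rightarrow> (real \<Rightarrow> real \<Rightarrow> real) \<Rightarrow> real \<Rightarrow> real \<Rightarrow>
   (real \<Rightarrow> real) \<Rightarrow> (real \<Rightarrow> real) \<Rightarrow> (real \<Rightarrow> real) \<Rightarrow> real" where
  "cost q l g T t \<xi> d\<xi> a =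
     (LINT s:{t..T}|lborel. l (\<xi> s) (d\<xi> s) s + (1/q) * \<bar>a s\<bar> powr q) + g (\<xi> T) (d\<xi> T)"

definition value_fun ::
  "real \<Rightarrow> (real \<Rightarrow> real \<Rightarrow> real \<Rightarrow> real) \<Rightarrow> (real \<Rightarrow> real \<Rightarrow> real) \<Rightarrow> real \<Rightarrow>
   real \<Rightarrow> real \<Rightarrow> real \<Rightarrow> real" where
  "value_fun q l g T t x v =
     Inf {cost q l g T t \<xi> d\<xi> a | \<xi> d\<xi> a.
            W2q_traj q t T \<xi> d\<xi> a \<and> \<xi> t = x \<and> d\<xi> t = v \<and> (\<forall>s\<in>{t..T}. \<xi> s \<in> {-1..1})}"

end

theory Submission
  imports Defs
begin

lemma maxpow_deriv:
  fixes k y :: real assumes k: "k > 1"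
  shows "((\<lambda>y. (max 0 y) powr k) has_real_derivative k * (max 0 y) powr (k-1)) (at y)"
proof (cases "y > 0")
  case True
  have "((\<lambda>y. y powr k) has_real_derivative k * y powr (k-1)) (at y)"
    using True by (auto intro!: derivative_eq_intros)
  then have "((\<lambda>y. y powr k) has_real_derivative k * (max 0 y) powr (k-1)) (at y)"
    using True by simp
  then show ?thesis
    apply (rule has_field_derivative_transform_within_open[where S="{0<..}"])
    using True by auto
next
  case False
  show ?thesis
  proof (cases "y < 0")
    case True
    have "((\<lambda>y. 0) has_real_derivative 0) (at y)" by simp
    then have "((\<lambda>y. 0) has_real_derivative k * (max 0 y) powr (k-1)) (at y)"
      using True by simp
    then show ?thesis
      apply (rule has_field_derivative_transform_within_open[where S="{..<0}"])
      using True by auto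
  next
    case False
    with \<open>\<not> y > 0\<close> have y0: "y = 0" by auto
    have "((\<lambda>z. ((max 0 z) powr k - (max 0 0) powr k) / (z - 0)) \<longlongrightarrow> 0) (at 0)"
    proof (rule Lim_null_comparison)
      show "\<forall>\<^sub>F z in at 0. norm (((max 0 z) powr k - (max 0 0) powr k) / (z - 0)) \<le> \<bar>z\<bar> powr (k-1)"
      proof (rule always_eventually, intro allI)
        fix z :: real
        show "norm (((max 0 z) powr k - (max 0 0) powr k) / (z - 0)) \<le> \<bar>z\<bar> powr (k-1)"
        proof (cases "z > 0")
          case True
          then have "z powr k / z = z powr (k-1)" by (simp add: powr_diff)
          then show ?thesis using True by simp
        qed simp
      qed
      show "((\<lambda>z. \<bar>z\<bar> powr (k-1)) \<longlongrightarrow> 0) (at (0::real))"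
        by (rule tendsto_zero_powrI) (auto intro!: tendsto_eq_intros simp: k)
    qed
    then show ?thesis using y0 k by (simp add: has_field_derivative_iff)
  qed
qed


definition brk0 :: "real \<Rightarrow> real \<Rightarrow> real \<Rightarrow> real \<Rightarrow> real \<Rightarrow> real" where
  "brk0 p c t h s = - c * (max 0 (t+h-s)) powr (p+2) / ((p+1)*(p+2))"
definition brk1 :: "real \<Rightarrow> real \<Rightarrow> real \<Rightarrow> real \<Rightarrow> real \<Rightarrow> real" where
  "brk1 p c t h s = c * (max 0 (t+h-s)) powr (p+1) / (p+1)"
definition brk2 :: "real \<Rightarrow> real \<Rightarrow> real \<Rightarrow> real \<Rightarrow> real \<Rightarrow> real" where
  "brk2 p c t h s = - c * (max 0 (t+h-s)) powr p"

lemma maxpow_deriv_comp: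
  fixes k :: real assumes k: "k > 1"
  shows "((\<lambda>s. (max 0 (t+h-s)) powr k) has_real_derivative - (k * (max 0 (t+h-s)) powr (k-1))) (at s within S)"
proof -
  have d: "((\<lambda>s. t+h-s) has_real_derivative -1) (at s within S)"
    by (auto intro!: derivative_eq_intros)
  have "((\<lambda>y. (max 0 y) powr k) \<circ> (\<lambda>s. t+h-s) has_real_derivative (k * (max 0 (t+h-s)) powr (k-1)) * (-1)) (at s within S)"
    by (rule DERIV_chain[OF maxpow_deriv[OF k] d])
  then show ?thesis by (simp add: o_def)
qed

lemma brk0_deriv: "p > 0 \<Longrightarrow> (brk0 p c t h has_real_derivative brk1 p c t h s) (at s within S)"
proof -
  assume p: "p > 0"
  have "((\<lambda>s. - c / ((p+1)*(p+2)) * (max 0 (t+h-s)) powr (p+2)) has_real_derivative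
      - c / ((p+1)*(p+2)) * (- ((p+2) * (max 0 (t+h-s)) powr (p+2-1)))) (at s within S)"
    by (intro DERIV_cmult maxpow_deriv_comp) (use p in simp)
  moreover have "- c / ((p+1)*(p+2)) * (- ((p+2) * (max 0 (t+h-s)) powr (p+2-1))) = brk1 p c t h s"
  proof -
    have e: "p + 2 - 1 = p + 1" by simp
    have "-c/((p+1)*(p+2)) * (-((p+2)*X)) = c*X/(p+1)" for X using p by simp
    then show ?thesis unfolding e brk1_def by simp
  qed
  moreover have "(\<lambda>s. - c / ((p+1)*(p+2)) * (max 0 (t+h-s)) powr (p+2)) = brk0 p c t h"
    by (auto simp: brk0_def fun_eq_iff)
  ultimately show ?thesis by simp
qed

lemma brk1_deriv: "p > 0 \<Longrightarrow> (brk1 p c t h has_real_derivative brk2 p c t h s) (at s within S)"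
proof -
  assume p: "p > 0"
  have "((\<lambda>s. c / (p+1) * (max 0 (t+h-s)) powr (p+1)) has_real_derivative
      c / (p+1) * (- ((p+1) * (max 0 (t+h-s)) powr (p+1-1)))) (at s within S)"
    by (intro DERIV_cmult maxpow_deriv_comp) (use p in simp)
  moreover have "c / (p+1) * (- ((p+1) * (max 0 (t+h-s)) powr (p+1-1))) = brk2 p c t h s"
    using p by (simp add: brk2_def field_simps)
  moreover have "(\<lambda>s. c / (p+1) * (max 0 (t+h-s)) powr (p+1)) = brk1 p c t h"
    by (auto simp: brk1_def fun_eq_iff)
  ultimately show ?thesis by simp
qed

lemma brk2_cont: "p > 0 \<Longrightarrow> continuous_on S (brk2 p c t h)"
  unfolding brk2_def
  by (intro continuous_intros continuous_on_powr') auto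

lemma brk1_cont: "p > 0 \<Longrightarrow> continuous_on S (brk1 p c t h)"
  by (meson DERIV_continuous brk1_deriv continuous_at_imp_continuous_on)

lemma brk0_cont: "p > 0 \<Longrightarrow> continuous_on S (brk0 p c t h)"
  by (meson DERIV_continuous brk0_deriv continuous_at_imp_continuous_on)

lemma brk_after:
  assumes "s \<ge> t + h" "p > 0"
  shows "brk0 p c t h s = 0" "brk1 p c t h s = 0" "brk2 p c t h s = 0"
  using assms by (auto simp: brk0_def brk1_def brk2_def max_def)

lemma brk0_bounds:
  assumes "c \<ge> 0" "p > 0" "s \<ge> t" "h \<ge> 0"
  shows "brk0 p c t h s \<le> 0" "brk0 p c t h s \<ge> brk0 p c t h t"
proof -
  show "brk0 p c t h s \<le> 0" using assms by (simp add: brk0_def)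
  have "(max 0 (t+h-s)) powr (p+2) \<le> (max 0 (t+h-t)) powr (p+2)"
    using assms by (intro powr_mono2) auto
  then show "brk0 p c t h s \<ge> brk0 p c t h t"
    using assms unfolding brk0_def
    by (intro divide_right_mono) (auto intro: mult_left_mono)
qed

lemma brk2_integral:
  assumes "p > 0" "t \<le> s"
  shows "(LINT r:{t..s}|lborel. brk2 p c t h r) = brk1 p c t h s - brk1 p c t h t"
  unfolding set_lebesgue_integral_def
  using assms
  by (intro integral_FTC_atLeastAtMost brk2_cont)
     (auto simp: has_real_derivative_iff_has_vector_derivative[symmetric] intro!: brk1_deriv)

lemma brk_cost:
  assumes q: "q > 1" and p: "p = 1/(q-1)" and c: "c > 0" and h: "h > 0"
  shows "(LINT r:{t..t+h}|lborel. \<bar>brk2 p c t h r\<bar> powr q) = c powr q * h powr (p+2) / (p+2)"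
proof -
  have p0: "p > 0" using p q by simp
  have pq: "p * q = p + 1" using p q by (simp add: field_simps)
  have eq: "\<bar>brk2 p c t h r\<bar> powr q = c powr q * (max 0 (t+h-r)) powr (p+1)" for r
  proof -
    have "\<bar>brk2 p c t h r\<bar> = c * (max 0 (t+h-r)) powr p" using c by (simp add: brk2_def)
    then have "\<bar>brk2 p c t h r\<bar> powr q = c powr q * ((max 0 (t+h-r)) powr p) powr q"
      using c by (simp add: powr_mult)
    also have "\<dots> = c powr q * (max 0 (t+h-r)) powr (p+1)"
      by (simp add: powr_powr pq)
    finally show ?thesis .
  qed
  let ?F = "\<lambda>s. - (c powr q) / (p+2) * (max 0 (t+h-s)) powr (p+2)"
  have der: "(?F has_real_derivative c powr q * (max 0 (t+h-s)) powr (p+1)) (at s within S)" for s S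
  proof -
    have "(?F has_real_derivative - (c powr q) / (p+2) * (- ((p+2) * (max 0 (t+h-s)) powr (p+2-1)))) (at s within S)"
      by (intro DERIV_cmult maxpow_deriv_comp) (use p0 in simp)
    moreover have "- (c powr q) / (p+2) * (- ((p+2) * (max 0 (t+h-s)) powr (p+2-1))) = c powr q * (max 0 (t+h-s)) powr (p+1)"
      using p0 by (simp add: field_simps)
    ultimately show ?thesis by simp
  qed
  have cont: "continuous_on {t..t+h} (\<lambda>r. c powr q * (max 0 (t+h-r)) powr (p+1))"
    by (intro continuous_intros continuous_on_powr') (use p0 in auto)
  have "(LINT r:{t..t+h}|lborel. \<bar>brk2 p c t h r\<bar> powr q) = (LINT r:{t..t+h}|lborel. c powr q * (max 0 (t+h-r)) powr (p+1))"
    by (simp add: eq)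
  also have "\<dots> = ?F (t+h) - ?F t"
    unfolding set_lebesgue_integral_def
    apply (rule integral_FTC_atLeastAtMost[where F="?F"])
    using h apply simp
     apply (subst has_real_derivative_iff_has_vector_derivative[symmetric])
     apply (rule der)
    apply (rule cont)
    done
  also have "\<dots> = c powr q * h powr (p+2) / (p+2)" using h by simp
  finally show ?thesis .
qed

lemma fubini_tri:
  fixes a :: "real \<Rightarrow> real"
  assumes ai: "set_integrable lborel {t..S} a" and tS: "t \<le> S"
  shows "set_integrable lborel {t..S} (\<lambda>s. LINT r:{t..s}|lborel. a r)"
    and "(LINT s:{t..S}|lborel. (LINT r:{t..s}|lborel. a r)) = (LINT r:{t..S}|lborel. (S - r) * a r)"
proof -
  define a' where "a' r = indicator {t..S} r * a r" for r
  have a'i: "integrable lborel a'"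
    using ai unfolding set_integrable_def a'_def by simp
  have a'm[measurable]: "a' \<in> borel_measurable lborel"
    using a'i by (rule borel_measurable_integrable)
  define F where "F r s = indicator {t..S} s * (indicator {t..s} r * a' r)" for r s :: real
  have Fm[measurable]: "(\<lambda>(r,s). F r s) \<in> borel_measurable (lborel \<Otimes>\<^sub>M lborel)"
  proof -
    have am: "(\<lambda>x. a' (fst x)) \<in> borel_measurable (lborel \<Otimes>\<^sub>M lborel)"
      by (rule measurable_compose[OF measurable_fst]) (simp add: a'm)
    have eq: "(\<lambda>(r,s). F r s) = (\<lambda>x. indicator {t..S} (snd x) * (of_bool (t \<le> fst x \<and> fst x \<le> snd x) * a' (fst x)))"
      by (auto simp: F_def indicator_def fun_eq_iff)
    show ?thesis unfolding eq using am by measurable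
  qed
  have inner_s: "(\<integral>s. indicator {t..S} s * indicator {t..s} r \<partial>lborel) = indicator {t..S} r * (S - r)" for r :: real
  proof (cases "r \<in> {t..S}")
    case True
    have "(\<lambda>s. indicator {t..S} s * indicator {t..s} r) = (indicator {r..S} :: real \<Rightarrow> real)"
      using True by (auto simp: fun_eq_iff indicator_def)
    then show ?thesis using True by simp
  next
    case False
    have "(\<lambda>s. indicator {t..S} s * indicator {t..s} r) = (\<lambda>_. 0::real)"
      using False by (auto simp: fun_eq_iff indicator_def)
    then show ?thesis using False by simp
  qed
  have int_prod: "integrable (lborel \<Otimes>\<^sub>M lborel) (\<lambda>(r,s). F r s)"
  proof (rule lborel_pair.Fubini_integrable)
    show "(\<lambda>(r,s). F r s) \<in> borel_measurable (lborel \<Otimes>\<^sub>M lborel)" by measurable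
    have eq: "(\<integral>s. norm ((\<lambda>(r,s). F r s) (r, s)) \<partial>lborel) = indicator {t..S} r * (S - r) * \<bar>a' r\<bar>" for r
    proof -
      have "(\<integral>s. norm ((\<lambda>(r,s). F r s) (r, s)) \<partial>lborel) = (\<integral>s. (indicator {t..S} s * indicator {t..s} r) * \<bar>a' r\<bar> \<partial>lborel)"
        by (simp add: F_def abs_mult mult.assoc[symmetric])
      also have "\<dots> = indicator {t..S} r * (S - r) * \<bar>a' r\<bar>"
        by (simp only: integral_mult_left_zero inner_s)
      finally show ?thesis .
    qed
    show "integrable lborel (\<lambda>r. \<integral>s. norm ((\<lambda>(r,s). F r s) (r, s)) \<partial>lborel)"
      unfolding eq
    proof (rule Bochner_Integration.integrable_bound)
      show "integrable lborel (\<lambda>r. (S - t) * \<bar>a' r\<bar>)" using a'i by auto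
      show "(\<lambda>r. indicator {t..S} r * (S - r) * \<bar>a' r\<bar>) \<in> borel_measurable lborel" by measurable
      show "AE r in lborel. norm (indicator {t..S} r * (S - r) * \<bar>a' r\<bar>) \<le> norm ((S - t) * \<bar>a' r\<bar>)"
        using tS by (auto simp: indicator_def abs_mult intro!: mult_right_mono)
    qed
    show "AE r in lborel. integrable lborel (\<lambda>s. (\<lambda>(r,s). F r s) (r, s))"
    proof (rule AE_I2)
      fix r
      show "integrable lborel (\<lambda>s. (\<lambda>(r,s). F r s) (r, s))"
      proof (rule Bochner_Integration.integrable_bound)
        have "set_integrable lborel {t..S} (\<lambda>_. 1::real)"
          by (rule borel_integrable_atLeastAtMost') simp
        then show "integrable lborel (\<lambda>s. indicator {t..S} s * \<bar>a' r\<bar>)"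
          unfolding set_integrable_def by simp
        have eq: "(\<lambda>s. (\<lambda>(r,s). F r s) (r, s)) = (\<lambda>s. (of_bool (t \<le> r) * a' r) * indicator ({t..S} \<inter> {r..}) s)"
          by (auto simp: F_def indicator_def fun_eq_iff)
        show "(\<lambda>s. (\<lambda>(r,s). F r s) (r, s)) \<in> borel_measurable lborel" unfolding eq by measurable
        show "AE s in lborel. norm ((\<lambda>(r,s). F r s) (r, s)) \<le> norm (indicator {t..S} s * \<bar>a' r\<bar>)"
          by (auto simp: F_def indicator_def)
      qed
    qed
  qed
  have lhs: "(\<integral>r. F r s \<partial>lborel) = indicator {t..S} s * (LINT r:{t..s}|lborel. a r)" for s
  proof (cases "s \<in> {t..S}")
    case True
    have "(\<lambda>r. F r s) = (\<lambda>r. indicator {t..s} r *\<^sub>R a r)"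
      using True by (auto simp: fun_eq_iff F_def a'_def indicator_def)
    then show ?thesis using True by (simp add: set_lebesgue_integral_def)
  next
    case False
    then show ?thesis by (simp add: F_def)
  qed
  have rhs: "(\<integral>s. F r s \<partial>lborel) = indicator {t..S} r *\<^sub>R ((S - r) * a r)" for r
  proof -
    have "(\<integral>s. F r s \<partial>lborel) = (\<integral>s. (indicator {t..S} s * indicator {t..s} r) * a' r \<partial>lborel)"
      by (simp add: F_def mult.assoc)
    also have "\<dots> = indicator {t..S} r * (S - r) * a' r"
      by (simp only: integral_mult_left_zero inner_s)
    also have "\<dots> = indicator {t..S} r *\<^sub>R ((S - r) * a r)"
      by (simp add: a'_def indicator_def)
    finally show ?thesis .
  qed
  have "integrable lborel (\<lambda>s. \<integral>r. F r s \<partial>lborel)"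
    using lborel_pair.integrable_snd[OF int_prod] .
  then show "set_integrable lborel {t..S} (\<lambda>s. LINT r:{t..s}|lborel. a r)"
    unfolding set_integrable_def lhs by simp
  have "(\<integral>s. (\<integral>r. F r s \<partial>lborel) \<partial>lborel) = (\<integral>r. (\<integral>s. F r s \<partial>lborel) \<partial>lborel)"
    using lborel_pair.Fubini_integral[OF int_prod] .
  then show "(LINT s:{t..S}|lborel. (LINT r:{t..s}|lborel. a r)) = (LINT r:{t..S}|lborel. (S - r) * a r)"
    unfolding lhs rhs by (simp add: set_lebesgue_integral_def)
qed

lemma tangent_ineq:
  fixes q y z :: real
  assumes q: "q > 1" and y: "y \<ge> 0" and z: "z \<ge> 0"
  shows "y * z powr (q-1) \<le> y powr q / q + z powr q * (q-1) / q"
proof -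
  have "y * z powr (q-1) \<le> y powr q / q + (z powr (q-1)) powr (q/(q-1)) / (q/(q-1))"
    by (rule Youngs_inequality) (use q y z in \<open>auto simp: field_simps\<close>)
  also have "(z powr (q-1)) powr (q/(q-1)) = z powr q"
    using q by (simp add: powr_powr)
  finally show ?thesis by (simp add: field_simps)
qed

lemma set_integrable_cont_mult:
  fixes f g :: "real \<Rightarrow> real"
  assumes f: "set_integrable lborel {a..b} f" and g: "continuous_on {a..b} g"
  shows "set_integrable lborel {a..b} (\<lambda>x. g x * f x)"
proof -
  have "bounded (g ` {a..b})"
    using compact_imp_bounded[OF compact_continuous_image[OF g compact_Icc]] .
  then obtain B where B0: "\<forall>y\<in>g ` {a..b}. norm y \<le> B"
    unfolding bounded_iff by blast
  then have B: "\<And>x. x \<in> {a..b} \<Longrightarrow> norm (g x) \<le> B" by blast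
  have fm: "(\<lambda>x. indicator {a..b} x * f x) \<in> borel_measurable lborel"
    using f unfolding set_integrable_def by (simp add: borel_measurable_integrable)
  have gm: "(\<lambda>x. indicator {a..b} x *\<^sub>R g x) \<in> borel_measurable borel"
    by (rule borel_measurable_continuous_on_indicator) (use g in auto)
  then have gm': "(\<lambda>x. indicator {a..b} x * g x) \<in> borel_measurable lborel" by simp
  show ?thesis
  proof (rule set_integrable_bound[where f="\<lambda>x. B * f x"])
    show "set_integrable lborel {a..b} (\<lambda>x. B * f x)"
      using f by (simp add: set_integrable_mult_right)
    have "(\<lambda>x. indicator {a..b} x *\<^sub>R (g x * f x)) = (\<lambda>x. (indicator {a..b} x * g x) * (indicator {a..b} x * f x))"
      by (auto simp: indicator_def fun_eq_iff)
    then show "set_borel_measurable lborel {a..b} (\<lambda>x. g x * f x)"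
      unfolding set_borel_measurable_def using fm gm' by simp
    show "AE x in lborel. x \<in> {a..b} \<longrightarrow> norm (g x * f x) \<le> norm (B * f x)"
    proof (rule AE_I2, rule impI)
      fix x assume x: "x \<in> {a..b}"
      have "B \<ge> 0" using B[OF x] by simp
      then show "norm (g x * f x) \<le> norm (B * f x)"
        using B[OF x] by (simp add: abs_mult mult_right_mono)
    qed
  qed
qed

lemma W2q_D:
  assumes "W2q_traj q t T \<xi> d\<xi> a"
  shows "set_integrable lborel {t..T} a" "set_integrable lborel {t..T} (\<lambda>s. \<bar>a s\<bar> powr q)"
    "\<And>s. s \<in> {t..T} \<Longrightarrow> (\<xi> has_real_derivative d\<xi> s) (at s within {t..T})"
    "\<And>s. s \<in> {t..T} \<Longrightarrow> d\<xi> s = d\<xi> t + (LINT r:{t..s}|lborel. a r)"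
  using assms unfolding W2q_traj_def by blast+

lemma lower_accel:
  assumes q: "q > 1" and W: "W2q_traj q t T \<xi> d\<xi> a" and x0: "\<xi> t = x" and v0: "d\<xi> t = v"
    and le1: "\<forall>s\<in>{t..T}. \<xi> s \<le> 1" and x1: "x < 1" and v: "v > 0"
    and p: "p = 1/(q-1)" and h: "h = (p+2)*(1-x)/v" and c: "c = (p+1) * v / h powr (p+1)"
    and hT: "t + h \<le> T"
  shows "(1/q) * (LINT s:{t..T}|lborel. \<bar>a s\<bar> powr q) \<ge> c powr (q-1) * (1-x) / (q-1)"
proof -
  note WD = W2q_D[OF W]
  have p0: "p > 0" using p q by simp
  have h0: "h > 0" using h p0 x1 v by simp
  have c0: "c > 0" using c p0 v h0 by simp
  define S where "S = t + h"
  have sub: "{t..S} \<subseteq> {t..T}" using hT S_def by auto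
  have tS: "t \<le> S" using h0 S_def by simp
  have aiS: "set_integrable lborel {t..S} a"
    by (rule set_integrable_subset[OF WD(1) _ sub]) simp
  have aqiS: "set_integrable lborel {t..S} (\<lambda>s. \<bar>a s\<bar> powr q)"
    by (rule set_integrable_subset[OF WD(2) _ sub]) simp
  define A where "A s = (LINT r:{t..s}|lborel. a r)" for s
  have Ai: "set_integrable lborel {t..S} A" and Aint: "(LINT s:{t..S}|lborel. A s) = (LINT r:{t..S}|lborel. (S - r) * a r)"
    using fubini_tri[OF aiS tS] unfolding A_def by auto
  have ftc: "(d\<xi> has_integral (\<xi> S - \<xi> t)) {t..S}"
  proof (rule fundamental_theorem_of_calculus[OF tS])
    fix s assume s: "s \<in> {t..S}"
    then have "(\<xi> has_real_derivative d\<xi> s) (at s within {t..T})" using sub WD(3) by auto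
    then have "(\<xi> has_real_derivative d\<xi> s) (at s within {t..S})" by (rule DERIV_subset) (rule sub)
    then show "(\<xi> has_vector_derivative d\<xi> s) (at s within {t..S})"
      by (simp add: has_real_derivative_iff_has_vector_derivative)
  qed
  have "((\<lambda>s. v + A s) has_integral (\<xi> S - \<xi> t)) {t..S}"
    using ftc
    by (rule has_integral_cong[THEN iffD1, rotated]) (use WD(4) sub v0 in \<open>auto simp: A_def\<close>)
  moreover have "((\<lambda>s. v + A s) has_integral (measure lborel {t..S} *\<^sub>R v + integral {t..S} A)) {t..S}"
    by (intro has_integral_add has_integral_const_real integrable_integral set_borel_integral_eq_integral(1)[OF Ai])
  ultimately have "\<xi> S - \<xi> t = measure lborel {t..S} *\<^sub>R v + integral {t..S} A"
    by (rule has_integral_unique)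
  then have "\<xi> S - x = h * v + (LINT s:{t..S}|lborel. A s)"
    using tS x0 S_def set_borel_integral_eq_integral(2)[OF Ai] by simp
  moreover have "\<xi> S \<le> 1" using le1 sub tS by auto
  ultimately have key: "(LINT r:{t..S}|lborel. (S - r) * a r) \<le> 1 - x - h * v"
    using Aint by simp
  define z where "z r = \<bar>brk2 p c t h r\<bar>" for r
  have zS: "z r = c * (S - r) powr p" if "r \<in> {t..S}" for r
    using that c0 by (simp add: z_def brk2_def S_def)
  have zq1: "z r powr (q-1) = c powr (q-1) * (S - r)" if "r \<in> {t..S}" for r
  proof -
    have "z r powr (q-1) = c powr (q-1) * ((S - r) powr p) powr (q-1)"
      using zS[OF that] c0 that by (simp add: powr_mult)
    also have "((S - r) powr p) powr (q-1) = S - r"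
      using p q that by (simp add: powr_powr)
    finally show ?thesis .
  qed
  have pw: "\<bar>a r\<bar> powr q / q \<ge> c powr (q-1) * (- ((S - r) * a r)) - z r powr q * (q-1) / q"
    if "r \<in> {t..S}" for r
  proof -
    have "\<bar>a r\<bar> * z r powr (q-1) \<le> \<bar>a r\<bar> powr q / q + z r powr q * (q-1) / q"
      by (rule tangent_ineq) (use q in \<open>auto simp: z_def\<close>)
    moreover have "- ((S - r) * a r) \<le> (S - r) * \<bar>a r\<bar>" using that by (auto simp: abs_if)
    then have "c powr (q-1) * (- ((S - r) * a r)) \<le> c powr (q-1) * ((S - r) * \<bar>a r\<bar>)"
      by (intro mult_left_mono) auto
    ultimately show ?thesis using zq1[OF that] by (simp add: algebra_simps)
  qed
  have Sai: "set_integrable lborel {t..S} (\<lambda>r. (S - r) * a r)"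
    by (rule set_integrable_cont_mult[OF aiS]) (intro continuous_intros)
  have zqi: "set_integrable lborel {t..S} (\<lambda>r. z r powr q)"
    unfolding z_def
    by (rule borel_integrable_atLeastAtMost') (intro continuous_intros continuous_on_powr' brk2_cont p0, use q in auto)
  have zcost: "(LINT r:{t..S}|lborel. z r powr q) = c powr q * h powr (p+2) / (p+2)"
    unfolding z_def S_def by (rule brk_cost[OF q p c0 h0])
  have Ri: "set_integrable lborel {t..S} (\<lambda>r. (- (c powr (q-1))) * ((S - r) * a r) - ((q-1)/q) * z r powr q)"
    by (intro set_integral_diff(1) set_integrable_mult_right Sai zqi)
  have "(LINT r:{t..S}|lborel. (- (c powr (q-1))) * ((S - r) * a r) - ((q-1)/q) * z r powr q)
      \<le> (LINT r:{t..S}|lborel. \<bar>a r\<bar> powr q / q)"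
  proof (rule set_integral_mono[OF Ri])
    show "set_integrable lborel {t..S} (\<lambda>r. \<bar>a r\<bar> powr q / q)"
      using aqiS by (simp add: set_integrable_divide)
    fix r assume r: "r \<in> {t..S}"
    show "(- (c powr (q-1))) * ((S - r) * a r) - ((q-1)/q) * z r powr q \<le> \<bar>a r\<bar> powr q / q"
      using pw[OF r] by (simp add: algebra_simps)
  qed
  moreover have "(LINT r:{t..S}|lborel. (- (c powr (q-1))) * ((S - r) * a r) - ((q-1)/q) * z r powr q)
     = - (c powr (q-1)) * (LINT r:{t..S}|lborel. (S - r) * a r) - (q-1)/q * (LINT r:{t..S}|lborel. z r powr q)"
    apply (subst set_integral_diff(2))
      apply (rule set_integrable_mult_right, rule Sai)
     apply (rule set_integrable_mult_right, rule zqi)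
    apply (simp only: set_integral_mult_right)
    done
  ultimately have M: "- (c powr (q-1)) * (LINT r:{t..S}|lborel. (S - r) * a r) - (q-1)/q * (c powr q * h powr (p+2) / (p+2))
      \<le> (LINT r:{t..S}|lborel. \<bar>a r\<bar> powr q / q)" using zcost by simp
  have hv: "h * v = (p+2) * (1-x)" using h v by simp
  have chp: "c * h powr (p+1) = (p+1) * v" using c h0 by simp
  have e1: "c powr q = c powr (q-1) * c powr 1"
    by (subst powr_add[symmetric]) simp
  have e2: "h powr (p+2) = h powr (p+1) * h powr 1"
    by (subst powr_add[symmetric]) (simp add: add.assoc)
  have "c powr q * h powr (p+2) = c powr (q-1) * (c * h powr (p+1)) * h"
    unfolding e1 e2 using c0 h0 by simp
  also have "\<dots> = c powr (q-1) * (p+1) * (p+2) * (1-x)"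
  proof -
    have "c powr (q-1) * (c * h powr (p+1)) * h = c powr (q-1) * (p+1) * (h * v)"
      unfolding chp by (simp add: algebra_simps)
    then show ?thesis unfolding hv by (simp add: algebra_simps)
  qed
  finally have Z: "c powr q * h powr (p+2) / (p+2) = c powr (q-1) * (p+1) * (1-x)"
    using p0 by simp
  have J: "- (c powr (q-1)) * (LINT r:{t..S}|lborel. (S - r) * a r) \<ge> c powr (q-1) * ((p+1) * (1-x))"
  proof -
    have "(LINT r:{t..S}|lborel. (S - r) * a r) \<le> - ((p+1) * (1-x))" using key hv by (simp add: algebra_simps)
    then have "c powr (q-1) * ((p+1) * (1-x)) \<le> c powr (q-1) * (- (LINT r:{t..S}|lborel. (S - r) * a r))"
      by (intro mult_left_mono) auto
    then show ?thesis by simp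
  qed
  have pq: "(p+1) / q = 1/(q-1)" using p q by (simp add: field_simps)
  have "c powr (q-1) * (1-x) / (q-1) = c powr (q-1) * ((p+1) * (1-x)) - (q-1)/q * (c powr (q-1) * (p+1) * (1-x))"
  proof -
    have "c powr (q-1) * ((p+1) * (1-x)) - (q-1)/q * (c powr (q-1) * (p+1) * (1-x))
        = c powr (q-1) * (1-x) * ((p+1) / q)" using q by (simp add: field_simps)
    then show ?thesis unfolding pq by simp
  qed
  also have "\<dots> \<le> (LINT r:{t..S}|lborel. \<bar>a r\<bar> powr q / q)"
    using M J Z by simp
  also have "\<dots> = (1/q) * (LINT r:{t..S}|lborel. \<bar>a r\<bar> powr q)"
    by (simp add: set_integral_divide_zero)
  also have "\<dots> \<le> (1/q) * (LINT s:{t..T}|lborel. \<bar>a s\<bar> powr q)"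
  proof -
    have "(LINT r:{t..S}|lborel. \<bar>a r\<bar> powr q) \<le> (LINT s:{t..T}|lborel. \<bar>a s\<bar> powr q)"
      unfolding set_lebesgue_integral_def
      apply (rule integral_mono)
      using aqiS WD(2) sub unfolding set_integrable_def
      by (auto simp: indicator_def)
    then show ?thesis using q by (simp add: divide_right_mono)
  qed
  finally show ?thesis .
qed

lemma powr_shift1:
  fixes x a :: real assumes "x > 0" shows "x powr a = x powr (a - 1) * x"
proof -
  have "x powr (a - 1) * x powr 1 = x powr ((a - 1) + 1)" by (rule powr_add[symmetric])
  then show ?thesis using assms by simp
qed

lemma E_eq:
  fixes q d v p h c :: real
  assumes q: "q > 1" and d: "d > 0" and v: "v > 0" and p: "p = 1/(q-1)"
    and h: "h = (p+2)*d/v" and c: "c = (p+1) * v / h powr (p+1)"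
  shows "c powr (q-1) * d / (q-1) = q powr (q-1) / (2*q-1) powr q * (v powr (2*q-1) / d powr (q-1))"
proof -
  have q1: "q - 1 > 0" using q by simp
  have p1: "p + 1 = q/(q-1)" using p q1 by (simp add: field_simps)
  have p2: "p + 2 = (2*q-1)/(q-1)" using p q1 by (simp add: field_simps)
  have p0: "p > 0" using p q1 by simp
  have h0: "h > 0" unfolding h using d v p0 by simp
  have pq: "(p+1)*(q-1) = q" using p1 q1 by simp
  define A where "A = q powr (q-1)"
  define B where "B = (2*q-1) powr q"
  define Q1 where "Q1 = (q-1) powr (q-1)"
  define V1 where "V1 = v powr (q-1)"
  define Vq where "Vq = v powr q"
  define D1 where "D1 = d powr (q-1)"
  have pos: "A > 0" "B > 0" "Q1 > 0" "V1 > 0" "Vq > 0" "D1 > 0"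
    unfolding A_def B_def Q1_def V1_def Vq_def D1_def using q d v by simp_all
  have hq: "(h powr (p+1)) powr (q-1) = h powr q" by (simp add: powr_powr pq)
  have s1: "c powr (q-1) = (p+1) powr (q-1) * V1 / h powr q"
    unfolding c V1_def using q1 v h0
    by (simp add: powr_divide powr_mult hq)
  have qq: "(q-1) powr q = Q1 * (q-1)"
    unfolding Q1_def using q1 by (rule powr_shift1)
  have dq: "d powr q = D1 * d"
    unfolding D1_def using d by (rule powr_shift1)
  have vv: "v powr (2*q-1) = V1 * Vq"
  proof -
    have e1: "v powr (q-1) * v powr q = v powr ((q-1)+q)" by (rule powr_add[symmetric])
    have e2: "v powr (2*q-1) = v powr ((q-1)+q)"
      by (rule arg_cong[where f="\<lambda>e. v powr e"]) simp
    show ?thesis unfolding V1_def Vq_def e2 e1[symmetric] ..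
  qed
  have s2: "h powr q = B / (Q1 * (q-1)) * (D1 * d) / Vq"
    unfolding h p2 B_def Vq_def using q1 d v
    by (simp add: powr_divide powr_mult qq dq)
  have s3: "(p+1) powr (q-1) = A / Q1"
    unfolding p1 A_def Q1_def using q1 by (simp add: powr_divide)
  have "c powr (q-1) * d / (q-1) = A / Q1 * V1 / (B / (Q1 * (q-1)) * (D1 * d) / Vq) * d / (q-1)"
    unfolding s1 s2 s3 ..
  also have "\<dots> = A / B * (V1 * Vq / D1)"
    using pos q1 d by (simp add: field_simps)
  finally show ?thesis unfolding vv A_def B_def D1_def .
qed

lemma brake_Z:
  fixes q d v p h c :: real
  assumes q: "q > 1" and d: "d > 0" and v: "v > 0" and p: "p = 1/(q-1)"
    and h: "h = (p+2)*d/v" and c: "c = (p+1) * v / h powr (p+1)"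
  shows "c powr q * h powr (p+2) / (p+2) = c powr (q-1) * (p+1) * d"
proof -
  have p0: "p > 0" using p q by simp
  have h0: "h > 0" using h p0 d v by simp
  have c0: "c > 0" using c p0 v h0 by simp
  have hv: "h * v = (p+2) * d" using h v by simp
  have chp: "c * h powr (p+1) = (p+1) * v" using c h0 by simp
  have e1: "c powr q = c powr (q-1) * c powr 1"
    by (subst powr_add[symmetric]) simp
  have e2: "h powr (p+2) = h powr (p+1) * h powr 1"
    by (subst powr_add[symmetric]) (simp add: add.assoc)
  have "c powr q * h powr (p+2) = c powr (q-1) * (c * h powr (p+1)) * h"
    unfolding e1 e2 using c0 h0 by simp
  also have "\<dots> = c powr (q-1) * (p+1) * (p+2) * d"
  proof -
    have "c powr (q-1) * (c * h powr (p+1)) * h = c powr (q-1) * (p+1) * (h * v)"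
      unfolding chp by (simp add: algebra_simps)
    then show ?thesis unfolding hv by (simp add: algebra_simps)
  qed
  finally show ?thesis using p0 by simp
qed

lemma powr_le_self:
  fixes th q :: real assumes "0 \<le> th" "th \<le> 1" "q \<ge> 1"
  shows "th powr q \<le> th"
proof (cases "th = 0")
  case False
  then show ?thesis using assms by (intro powr_le_one_le) auto
qed simp

lemma convex_powr0:
  fixes q th X Y :: real
  assumes q: "q \<ge> 1" and th: "0 < th" "th < 1" and X: "X \<ge> 0" and Y: "Y \<ge> 0"
  shows "((1-th)*X + th*Y) powr q \<le> (1-th) * X powr q + th * Y powr q"
proof (cases "X = 0 \<or> Y = 0")
  case True
  then show ?thesis
  proof
    assume X0: "X = 0"
    have "(th*Y) powr q = th powr q * Y powr q" using th Y by (simp add: powr_mult)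
    also have "\<dots> \<le> th * Y powr q"
      using powr_le_self[of th q] th q by (intro mult_right_mono) auto
    finally show ?thesis using X0 by simp
  next
    assume Y0: "Y = 0"
    have "((1-th)*X) powr q = (1-th) powr q * X powr q" using th X by (simp add: powr_mult)
    also have "\<dots> \<le> (1-th) * X powr q"
      using powr_le_self[of "1-th" q] th q by (intro mult_right_mono) auto
    finally show ?thesis using Y0 by simp
  qed
next
  case False
  then have "X > 0" "Y > 0" using X Y by auto
  then show ?thesis
    using convex_onD[OF powr_convex[OF q], of th X Y] th by simp
qed

lemma powr_sum_le:
  fixes q th A B :: real
  assumes q: "q \<ge> 1" and th: "0 < th" "th < 1" and A: "A \<ge> 0" and B: "B \<ge> 0"
  shows "(A + B) powr q \<le> th powr (1-q) * B powr q + (1-th) powr (1-q) * A powr q"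
proof -
  define X where "X = A / (1-th)"
  define Y where "Y = B / th"
  have eqAB: "A + B = (1-th)*X + th*Y" using th by (simp add: X_def Y_def)
  have "X \<ge> 0" "Y \<ge> 0" using A B th by (auto simp: X_def Y_def)
  then have "(A + B) powr q \<le> (1-th) * X powr q + th * Y powr q"
    unfolding eqAB by (rule convex_powr0[OF q th])
  also have "(1-th) * X powr q = (1-th) powr (1-q) * A powr q"
    using th A by (simp add: X_def powr_divide powr_diff)
  also have "th * Y powr q = th powr (1-q) * B powr q"
    using th B by (simp add: Y_def powr_divide powr_diff)
  finally show ?thesis by simp
qed

lemma abs_powr_sum_le:
  fixes q th a b :: real
  assumes q: "q \<ge> 1" and th: "0 < th" "th < 1"
  shows "\<bar>a + b\<bar> powr q \<le> th powr (1-q) * \<bar>b\<bar> powr q + (1-th) powr (1-q) * \<bar>a\<bar> powr q"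
proof -
  have "\<bar>a + b\<bar> powr q \<le> (\<bar>a\<bar> + \<bar>b\<bar>) powr q"
    using q by (intro powr_mono2) auto
  also have "\<dots> \<le> th powr (1-q) * \<bar>b\<bar> powr q + (1-th) powr (1-q) * \<bar>a\<bar> powr q"
    by (rule powr_sum_le[OF q th]) auto
  finally show ?thesis .
qed

definition adm where
  "adm q t T x v \<xi> d\<xi> a \<longleftrightarrow> W2q_traj q t T \<xi> d\<xi> a \<and> \<xi> t = x \<and> d\<xi> t = v \<and> (\<forall>s\<in>{t..T}. \<xi> s \<in> {-1..1})"

lemma value_fun_adm:
  "value_fun q l g T t x v = Inf {cost q l g T t \<xi> d\<xi> a | \<xi> d\<xi> a. adm q t T x v \<xi> d\<xi> a}"
  unfolding value_fun_def adm_def by simp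

lemma LINT_eq_integral_sub:
  fixes a :: "real \<Rightarrow> real"
  assumes "set_integrable lborel {t..T} a" "s \<in> {t..T}"
  shows "(LINT r:{t..s}|lborel. a r) = integral {t..s} a"
proof -
  have "set_integrable lborel {t..s} a"
    by (rule set_integrable_subset[OF assms(1)]) (use assms(2) in auto)
  then show ?thesis by (rule set_borel_integral_eq_integral(2))
qed

lemma W2q_cont:
  assumes W: "W2q_traj q t T \<xi> d\<xi> a"
  shows "continuous_on {t..T} \<xi>" "continuous_on {t..T} d\<xi>"
proof -
  note WD = W2q_D[OF W]
  show "continuous_on {t..T} \<xi>"
    unfolding continuous_on_eq_continuous_within
  proof
    fix s assume s: "s \<in> {t..T}"
    show "continuous (at s within {t..T}) \<xi>" by (rule DERIV_continuous[OF WD(3)[OF s]])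
  qed
  have ai: "a integrable_on {t..T}" by (rule set_borel_integral_eq_integral(1)[OF WD(1)])
  have "continuous_on {t..T} (\<lambda>s. d\<xi> t + integral {t..s} a)"
    by (intro continuous_intros indefinite_integral_continuous_1 ai)
  moreover have "d\<xi> t + integral {t..s} a = d\<xi> s" if s: "s \<in> {t..T}" for s
    using WD(4)[OF s] LINT_eq_integral_sub[OF WD(1) s] by simp
  ultimately show "continuous_on {t..T} d\<xi>"
    by (rule continuous_on_eq)
qed

lemma l_comp_cont:
  fixes l :: "real \<Rightarrow> real \<Rightarrow> real \<Rightarrow> real" and g :: "real \<Rightarrow> real \<Rightarrow> real"
  assumes lc: "continuous_on (Xi \<times> {0..T}) (\<lambda>((x, v), s). l x v s)"
    and t: "0 \<le> t" and W: "W2q_traj q t T \<xi> d\<xi> a" and rng: "\<forall>s\<in>{t..T}. \<xi> s \<in> {-1..1}"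
  shows "continuous_on {t..T} (\<lambda>s. l (\<xi> s) (d\<xi> s) s)"
proof -
  have c: "continuous_on {t..T} (\<lambda>s. ((\<xi> s, d\<xi> s), s))"
    using W2q_cont[OF W] by (intro continuous_intros) auto
  have sub: "(\<lambda>s. ((\<xi> s, d\<xi> s), s)) ` {t..T} \<subseteq> Xi \<times> {0..T}"
    using rng t by (auto simp: Xi_def)
  from continuous_on_compose2[OF lc c sub] show ?thesis by simp
qed

lemma l_comp_integrable:
  fixes l :: "real \<Rightarrow> real \<Rightarrow> real \<Rightarrow> real" and g :: "real \<Rightarrow> real \<Rightarrow> real"
  assumes lc: "continuous_on (Xi \<times> {0..T}) (\<lambda>((x, v), s). l x v s)"
    and t: "0 \<le> t" and W: "W2q_traj q t T \<xi> d\<xi> a" and rng: "\<forall>s\<in>{t..T}. \<xi> s \<in> {-1..1}"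
  shows "set_integrable lborel {t..T} (\<lambda>s. l (\<xi> s) (d\<xi> s) s)"
  by (rule borel_integrable_atLeastAtMost'[OF l_comp_cont[OF assms]])

lemma cost_split:
  fixes l :: "real \<Rightarrow> real \<Rightarrow> real \<Rightarrow> real" and g :: "real \<Rightarrow> real \<Rightarrow> real"
  assumes lc: "continuous_on (Xi \<times> {0..T}) (\<lambda>((x, v), s). l x v s)"
    and t: "0 \<le> t" and W: "W2q_traj q t T \<xi> d\<xi> a" and rng: "\<forall>s\<in>{t..T}. \<xi> s \<in> {-1..1}"
  shows "cost q l g T t \<xi> d\<xi> a = (LINT s:{t..T}|lborel. l (\<xi> s) (d\<xi> s) s)
           + (1/q) * (LINT s:{t..T}|lborel. \<bar>a s\<bar> powr q) + g (\<xi> T) (d\<xi> T)"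
proof -
  have i1: "set_integrable lborel {t..T} (\<lambda>s. l (\<xi> s) (d\<xi> s) s)"
    by (rule l_comp_integrable[OF assms])
  have i2: "set_integrable lborel {t..T} (\<lambda>s. (1/q) * \<bar>a s\<bar> powr q)"
    using W2q_D(2)[OF W] by (intro set_integrable_mult_right)
  show ?thesis unfolding cost_def
    by (subst set_integral_add(2)[OF i1 i2]) simp
qed

lemma cost_lower:
  fixes l :: "real \<Rightarrow> real \<Rightarrow> real \<Rightarrow> real" and g :: "real \<Rightarrow> real \<Rightarrow> real"
  assumes lc: "continuous_on (Xi \<times> {0..T}) (\<lambda>((x, v), s). l x v s)"
    and t: "0 \<le> t" "t \<le> T" and W: "W2q_traj q t T \<xi> d\<xi> a" and rng: "\<forall>s\<in>{t..T}. \<xi> s \<in> {-1..1}"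
    and Lb: "\<And>x v s. x \<in> {-1..1} \<Longrightarrow> s \<in> {0..T} \<Longrightarrow> \<bar>l x v s\<bar> \<le> Lb"
    and Gb: "\<And>x v. x \<in> {-1..1} \<Longrightarrow> \<bar>g x v\<bar> \<le> Gb"
  shows "cost q l g T t \<xi> d\<xi> a \<ge> - Lb * (T - t) - Gb + (1/q) * (LINT s:{t..T}|lborel. \<bar>a s\<bar> powr q)"
proof -
  have i1: "set_integrable lborel {t..T} (\<lambda>s. l (\<xi> s) (d\<xi> s) s)"
    by (rule l_comp_integrable[OF lc t(1) W rng])
  have ci: "set_integrable lborel {t..T} (\<lambda>s. - Lb)"
    by (rule borel_integrable_atLeastAtMost') simp
  have "(LINT s:{t..T}|lborel. - Lb) \<le> (LINT s:{t..T}|lborel. l (\<xi> s) (d\<xi> s) s)"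
  proof (rule set_integral_mono[OF ci i1])
    fix s assume s: "s \<in> {t..T}"
    have "\<bar>l (\<xi> s) (d\<xi> s) s\<bar> \<le> Lb" using Lb rng s t by auto
    then show "- Lb \<le> l (\<xi> s) (d\<xi> s) s" by simp
  qed
  moreover have "(LINT s:{t..T}|lborel. - Lb) = - Lb * (T - t)"
    using t by (simp add: set_integral_const)
  moreover have "g (\<xi> T) (d\<xi> T) \<ge> - Gb"
    using Gb[of "\<xi> T" "d\<xi> T"] rng t by auto
  ultimately show ?thesis
    unfolding cost_split[OF lc t(1) W rng] by simp
qed

lemma cost_upper:
  fixes l :: "real \<Rightarrow> real \<Rightarrow> real \<Rightarrow> real" and g :: "real \<Rightarrow> real \<Rightarrow> real"
  assumes lc: "continuous_on (Xi \<times> {0..T}) (\<lambda>((x, v), s). l x v s)"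
    and t: "0 \<le> t" "t \<le> T" and W: "W2q_traj q t T \<xi> d\<xi> a" and rng: "\<forall>s\<in>{t..T}. \<xi> s \<in> {-1..1}"
    and Lb: "\<And>x v s. x \<in> {-1..1} \<Longrightarrow> s \<in> {0..T} \<Longrightarrow> \<bar>l x v s\<bar> \<le> Lb"
    and Gb: "\<And>x v. x \<in> {-1..1} \<Longrightarrow> \<bar>g x v\<bar> \<le> Gb"
  shows "cost q l g T t \<xi> d\<xi> a \<le> Lb * (T - t) + Gb + (1/q) * (LINT s:{t..T}|lborel. \<bar>a s\<bar> powr q)"
proof -
  have i1: "set_integrable lborel {t..T} (\<lambda>s. l (\<xi> s) (d\<xi> s) s)"
    by (rule l_comp_integrable[OF lc t(1) W rng])
  have ci: "set_integrable lborel {t..T} (\<lambda>s. Lb)"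
    by (rule borel_integrable_atLeastAtMost') simp
  have "(LINT s:{t..T}|lborel. l (\<xi> s) (d\<xi> s) s) \<le> (LINT s:{t..T}|lborel. Lb)"
  proof (rule set_integral_mono[OF i1 ci])
    fix s assume s: "s \<in> {t..T}"
    have "\<bar>l (\<xi> s) (d\<xi> s) s\<bar> \<le> Lb" using Lb rng s t by auto
    then show "l (\<xi> s) (d\<xi> s) s \<le> Lb" by simp
  qed
  moreover have "(LINT s:{t..T}|lborel. Lb) = Lb * (T - t)"
    using t by (simp add: set_integral_const)
  moreover have "g (\<xi> T) (d\<xi> T) \<le> Gb"
    using Gb[of "\<xi> T" "d\<xi> T"] rng t by auto
  ultimately show ?thesis
    unfolding cost_split[OF lc t(1) W rng] by simp
qed

lemma set_integral_restrict:
  fixes f :: "real \<Rightarrow> real"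
  assumes "B \<subseteq> A" "\<And>s. s \<in> A \<Longrightarrow> s \<notin> B \<Longrightarrow> f s = 0"
  shows "(LINT s:A|M. f s) = (LINT s:B|M. f s)"
  unfolding set_lebesgue_integral_def
  by (rule Bochner_Integration.integral_cong) (use assms in \<open>auto simp: indicator_def\<close>)

lemma brk_init:
  fixes q x v p h c t :: real
  assumes q: "q > 1" and x1: "x < 1" and v: "v > 0" and p: "p = 1/(q-1)"
    and h: "h = (p+2)*(1-x)/v" and c: "c = (p+1) * v / h powr (p+1)"
  shows "brk0 p c t h t = -(1-x)" "brk1 p c t h t = v"
proof -
  have p0: "p > 0" using p q by simp
  have h0: "h > 0" unfolding h using p0 x1 v by simp
  have chp: "c * h powr (p+1) = (p+1) * v" using c h0 by simp
  have hv: "h * v = (p+2) * (1-x)" using h v by simp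
  have e2: "h powr (p+2) = h powr (p+1) * h powr 1"
    by (subst powr_add[symmetric]) (simp add: add.assoc)
  have "c * h powr (p+2) = (c * h powr (p+1)) * h" unfolding e2 using h0 by simp
  also have "\<dots> = (p+1) * (h * v)" unfolding chp by simp
  also have "\<dots> = (p+1) * (p+2) * (1-x)" unfolding hv by simp
  finally have ch2: "c * h powr (p+2) = (p+1) * (p+2) * (1-x)" .
  have "brk0 p c t h t = - (c * h powr (p+2)) / ((p+1)*(p+2))"
    using h0 by (simp add: brk0_def)
  also have "\<dots> = -(1-x)" unfolding ch2 using p0 by simp
  finally show "brk0 p c t h t = -(1-x)" .
  have "brk1 p c t h t = (c * h powr (p+1)) / (p+1)"
    using h0 by (simp add: brk1_def)
  also have "\<dots> = v" unfolding chp using p0 by simp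
  finally show "brk1 p c t h t = v" .
qed


lemma construct:
  fixes l :: "real \<Rightarrow> real \<Rightarrow> real \<Rightarrow> real" and g :: "real \<Rightarrow> real \<Rightarrow> real"
  assumes q: "q > 1"
    and lc: "continuous_on (Xi \<times> {0..T}) (\<lambda>((x, v), s). l x v s)"
    and t: "0 \<le> t"
    and Aeta: "adm q t T 1 0 \<eta> d\<eta> b"
    and x1: "x < 1" and v: "v > 0" and p: "p = 1/(q-1)"
    and h: "h = (p+2)*(1-x)/v" and c: "c = (p+1) * v / h powr (p+1)"
    and hT: "t + h \<le> T"
    and low: "\<And>s. s \<in> {t..t+h} \<Longrightarrow> \<eta> s - (1-x) \<ge> -1"
    and Lb: "\<And>x v s. x \<in> {-1..1} \<Longrightarrow> s \<in> {0..T} \<Longrightarrow> \<bar>l x v s\<bar> \<le> Lb"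
  shows "adm q t T x v (\<lambda>s. \<eta> s + brk0 p c t h s) (\<lambda>s. d\<eta> s + brk1 p c t h s) (\<lambda>s. b s + brk2 p c t h s)"
    and "cost q l g T t (\<lambda>s. \<eta> s + brk0 p c t h s) (\<lambda>s. d\<eta> s + brk1 p c t h s) (\<lambda>s. b s + brk2 p c t h s)
         \<le> cost q l g T t \<eta> d\<eta> b + 2 * Lb * h
           + (1/q) * (LINT s:{t..t+h}|lborel. \<bar>b s + brk2 p c t h s\<bar> powr q - \<bar>b s\<bar> powr q)"
proof -
  have Weta: "W2q_traj q t T \<eta> d\<eta> b" and eta0: "\<eta> t = 1" and deta0: "d\<eta> t = 0"
    and rngeta: "\<forall>s\<in>{t..T}. \<eta> s \<in> {-1..1}"
    using Aeta unfolding adm_def by blast+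
  note WD = W2q_D[OF Weta]
  have p0: "p > 0" using p q by simp
  have h0: "h > 0" unfolding h using p0 x1 v by simp
  have c0: "c > 0" unfolding c using p0 v h0 by simp
  have tT: "t \<le> T" using hT h0 by simp
  note bi = brk_init[OF q x1 v p h c, of t]
  define \<xi> where "\<xi> s = \<eta> s + brk0 p c t h s" for s
  define d\<xi> where "d\<xi> s = d\<eta> s + brk1 p c t h s" for s
  define a where "a s = b s + brk2 p c t h s" for s
  have w2i: "set_integrable lborel {t..T} (brk2 p c t h)"
    by (rule borel_integrable_atLeastAtMost'[OF brk2_cont[OF p0]])
  have ai: "set_integrable lborel {t..T} a"
    unfolding a_def by (rule set_integral_add(1)[OF WD(1) w2i])
  have aqi: "set_integrable lborel {t..T} (\<lambda>s. \<bar>a s\<bar> powr q)"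
  proof (rule set_integrable_bound[where f="\<lambda>s. (1/2) powr (1-q) * \<bar>brk2 p c t h s\<bar> powr q + (1 - 1/2) powr (1-q) * \<bar>b s\<bar> powr q"])
    have w2q: "set_integrable lborel {t..T} (\<lambda>s. \<bar>brk2 p c t h s\<bar> powr q)"
      by (rule borel_integrable_atLeastAtMost') (intro continuous_intros continuous_on_powr' brk2_cont p0, use q in auto)
    show "set_integrable lborel {t..T} (\<lambda>s. (1/2) powr (1-q) * \<bar>brk2 p c t h s\<bar> powr q + (1 - 1/2) powr (1-q) * \<bar>b s\<bar> powr q)"
      by (intro set_integral_add(1) set_integrable_mult_right w2q WD(2))
    have m1: "(\<lambda>s. indicator {t..T} s * b s) \<in> borel_measurable lborel"
      using WD(1) unfolding set_integrable_def by (simp add: borel_measurable_integrable)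
    have m2: "(\<lambda>s. indicator {t..T} s * brk2 p c t h s) \<in> borel_measurable lborel"
      using w2i unfolding set_integrable_def by (simp add: borel_measurable_integrable)
    have eq: "(\<lambda>s. indicator {t..T} s *\<^sub>R \<bar>a s\<bar> powr q) = (\<lambda>s. \<bar>indicator {t..T} s * b s + indicator {t..T} s * brk2 p c t h s\<bar> powr q)"
      using q by (auto simp: fun_eq_iff indicator_def a_def)
    show "set_borel_measurable lborel {t..T} (\<lambda>s. \<bar>a s\<bar> powr q)"
      unfolding set_borel_measurable_def eq using m1 m2 by measurable
    show "AE s in lborel. s \<in> {t..T} \<longrightarrow> norm (\<bar>a s\<bar> powr q) \<le> norm ((1/2) powr (1-q) * \<bar>brk2 p c t h s\<bar> powr q + (1 - 1/2) powr (1-q) * \<bar>b s\<bar> powr q)"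
    proof (rule AE_I2, rule impI)
      fix s
      have "\<bar>a s\<bar> powr q \<le> (1/2) powr (1-q) * \<bar>brk2 p c t h s\<bar> powr q + (1 - 1/2) powr (1-q) * \<bar>b s\<bar> powr q"
        unfolding a_def by (rule abs_powr_sum_le) (use q in auto)
      moreover have "0 \<le> (1/2) powr (1-q) * \<bar>brk2 p c t h s\<bar> powr q + (1 - 1/2) powr (1-q) * \<bar>b s\<bar> powr q"
        by simp
      ultimately show "norm (\<bar>a s\<bar> powr q) \<le> norm ((1/2) powr (1-q) * \<bar>brk2 p c t h s\<bar> powr q + (1 - 1/2) powr (1-q) * \<bar>b s\<bar> powr q)"
        by simp
    qed
  qed
  have der: "(\<xi> has_real_derivative d\<xi> s) (at s within {t..T})" if s: "s \<in> {t..T}" for s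
    unfolding \<xi>_def[abs_def] d\<xi>_def by (intro DERIV_add WD(3)[OF s] brk0_deriv p0)
  have deq: "d\<xi> s = d\<xi> t + (LINT r:{t..s}|lborel. a r)" if s: "s \<in> {t..T}" for s
  proof -
    have sub: "{t..s} \<subseteq> {t..T}" using s by auto
    have i1: "set_integrable lborel {t..s} b" by (rule set_integrable_subset[OF WD(1) _ sub]) simp
    have i2: "set_integrable lborel {t..s} (brk2 p c t h)" by (rule set_integrable_subset[OF w2i _ sub]) simp
    have "(LINT r:{t..s}|lborel. a r) = (LINT r:{t..s}|lborel. b r) + (LINT r:{t..s}|lborel. brk2 p c t h r)"
      unfolding a_def by (rule set_integral_add(2)[OF i1 i2])
    also have "(LINT r:{t..s}|lborel. brk2 p c t h r) = brk1 p c t h s - brk1 p c t h t"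
      by (rule brk2_integral[OF p0]) (use s in auto)
    finally show ?thesis using WD(4)[OF s] unfolding d\<xi>_def by simp
  qed
  have W: "W2q_traj q t T \<xi> d\<xi> a"
    unfolding W2q_traj_def using ai aqi der deq by blast
  have rng: "\<forall>s\<in>{t..T}. \<xi> s \<in> {-1..1}"
  proof
    fix s assume s: "s \<in> {t..T}"
    have le0: "brk0 p c t h s \<le> 0" using brk0_bounds(1)[of c p t s h] c0 p0 h0 s by auto
    have "\<xi> s \<ge> -1"
    proof (cases "s \<le> t + h")
      case True
      have "brk0 p c t h s \<ge> brk0 p c t h t" using brk0_bounds(2)[of c p t s h] c0 p0 h0 s by auto
      then show ?thesis using low[of s] True s bi unfolding \<xi>_def by auto
    next
      case False
      then show ?thesis using brk_after(1)[of t h s p c] p0 rngeta s unfolding \<xi>_def by auto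
    qed
    moreover have "\<xi> s \<le> 1"
    proof -
      have "\<eta> s \<le> 1" using rngeta s by auto
      then show ?thesis using le0 unfolding \<xi>_def by linarith
    qed
    ultimately show "\<xi> s \<in> {-1..1}" by simp
  qed
  show "adm q t T x v (\<lambda>s. \<eta> s + brk0 p c t h s) (\<lambda>s. d\<eta> s + brk1 p c t h s) (\<lambda>s. b s + brk2 p c t h s)"
    using W rng bi eta0 deta0 unfolding adm_def \<xi>_def[symmetric] d\<xi>_def[symmetric] a_def[symmetric]
    by (simp add: \<xi>_def d\<xi>_def)
  have xi_eq: "(\<lambda>s. \<eta> s + brk0 p c t h s) = \<xi>" "(\<lambda>s. d\<eta> s + brk1 p c t h s) = d\<xi>"
    "(\<lambda>s. b s + brk2 p c t h s) = a"
    by (auto simp: fun_eq_iff \<xi>_def d\<xi>_def a_def)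
  have after: "\<xi> s = \<eta> s" "d\<xi> s = d\<eta> s" "a s = b s" if "s \<ge> t + h" for s
    using brk_after[OF that p0] unfolding \<xi>_def d\<xi>_def a_def by simp_all
  have xiT: "\<xi> T = \<eta> T" "d\<xi> T = d\<eta> T" using after hT by auto
  have Lxi: "set_integrable lborel {t..T} (\<lambda>s. l (\<xi> s) (d\<xi> s) s)"
    by (rule l_comp_integrable[OF lc t W rng])
  have Leta: "set_integrable lborel {t..T} (\<lambda>s. l (\<eta> s) (d\<eta> s) s)"
    by (rule l_comp_integrable[OF lc t Weta rngeta])
  have subh: "{t..t+h} \<subseteq> {t..T}" using hT by auto
  have Ldiff: "(LINT s:{t..T}|lborel. l (\<xi> s) (d\<xi> s) s) - (LINT s:{t..T}|lborel. l (\<eta> s) (d\<eta> s) s) \<le> 2 * Lb * h"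
  proof -
    have "(LINT s:{t..T}|lborel. l (\<xi> s) (d\<xi> s) s) - (LINT s:{t..T}|lborel. l (\<eta> s) (d\<eta> s) s)
        = (LINT s:{t..T}|lborel. l (\<xi> s) (d\<xi> s) s - l (\<eta> s) (d\<eta> s) s)"
      by (rule set_integral_diff(2)[OF Lxi Leta, symmetric])
    also have "\<dots> = (LINT s:{t..t+h}|lborel. l (\<xi> s) (d\<xi> s) s - l (\<eta> s) (d\<eta> s) s)"
      by (rule set_integral_restrict[OF subh]) (simp add: after)
    also have "\<dots> \<le> (LINT s:{t..t+h}|lborel. 2 * Lb)"
    proof (rule set_integral_mono)
      show "set_integrable lborel {t..t+h} (\<lambda>s. l (\<xi> s) (d\<xi> s) s - l (\<eta> s) (d\<eta> s) s)"
        by (rule set_integrable_subset[OF set_integral_diff(1)[OF Lxi Leta] _ subh]) simp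
      show "set_integrable lborel {t..t+h} (\<lambda>s. 2 * Lb)"
        by (rule borel_integrable_atLeastAtMost') simp
      fix s assume s: "s \<in> {t..t+h}"
      then have sT: "s \<in> {t..T}" using subh by auto
      have "\<bar>l (\<xi> s) (d\<xi> s) s\<bar> \<le> Lb" using Lb rng sT t by auto
      moreover have "\<bar>l (\<eta> s) (d\<eta> s) s\<bar> \<le> Lb" using Lb rngeta sT t by auto
      ultimately show "l (\<xi> s) (d\<xi> s) s - l (\<eta> s) (d\<eta> s) s \<le> 2 * Lb" by simp
    qed
    also have "\<dots> = 2 * Lb * h" using h0 by (simp add: set_integral_const)
    finally show ?thesis .
  qed
  have Adiff: "(LINT s:{t..T}|lborel. \<bar>a s\<bar> powr q) - (LINT s:{t..T}|lborel. \<bar>b s\<bar> powr q)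
      = (LINT s:{t..t+h}|lborel. \<bar>b s + brk2 p c t h s\<bar> powr q - \<bar>b s\<bar> powr q)"
  proof -
    have "(LINT s:{t..T}|lborel. \<bar>a s\<bar> powr q) - (LINT s:{t..T}|lborel. \<bar>b s\<bar> powr q)
        = (LINT s:{t..T}|lborel. \<bar>a s\<bar> powr q - \<bar>b s\<bar> powr q)"
      by (rule set_integral_diff(2)[OF aqi WD(2), symmetric])
    also have "\<dots> = (LINT s:{t..t+h}|lborel. \<bar>a s\<bar> powr q - \<bar>b s\<bar> powr q)"
      by (rule set_integral_restrict[OF subh]) (simp add: after)
    finally show ?thesis by (simp add: a_def)
  qed
  show "cost q l g T t (\<lambda>s. \<eta> s + brk0 p c t h s) (\<lambda>s. d\<eta> s + brk1 p c t h s) (\<lambda>s. b s + brk2 p c t h s)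
         \<le> cost q l g T t \<eta> d\<eta> b + 2 * Lb * h
           + (1/q) * (LINT s:{t..t+h}|lborel. \<bar>b s + brk2 p c t h s\<bar> powr q - \<bar>b s\<bar> powr q)"
  proof -
    define Ax where "Ax = (LINT s:{t..T}|lborel. \<bar>a s\<bar> powr q)"
    define Ae where "Ae = (LINT s:{t..T}|lborel. \<bar>b s\<bar> powr q)"
    define D where "D = (LINT s:{t..t+h}|lborel. \<bar>b s + brk2 p c t h s\<bar> powr q - \<bar>b s\<bar> powr q)"
    have "Ax = Ae + D" using Adiff unfolding Ax_def Ae_def D_def by linarith
    then have e: "(1/q) * Ax = (1/q) * Ae + (1/q) * D" by (simp add: distrib_left)
    show ?thesis
      unfolding xi_eq cost_split[OF lc t W rng] cost_split[OF lc t Weta rngeta] xiT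
      using Ldiff e unfolding Ax_def Ae_def D_def by linarith
  qed
qed

lemma adm_const: "q > 0 \<Longrightarrow> adm q t T 1 0 (\<lambda>_. 1) (\<lambda>_. 0) (\<lambda>_. 0)"
  unfolding adm_def W2q_traj_def by (auto simp: set_integrable_def)

lemma LINT_abs_powr_nonneg: "0 \<le> (LINT s:A|lborel. \<bar>a s\<bar> powr (q::real))"
  unfolding set_lebesgue_integral_def by (rule integral_nonneg_AE) (auto simp: indicator_def)

definition Kc :: "real \<Rightarrow> real" where "Kc q = q powr (q-1) / (2*q-1) powr q"
definition pp :: "real \<Rightarrow> real" where "pp q = 1/(q-1)"
definition hh :: "real \<Rightarrow> real \<Rightarrow> real \<Rightarrow> real" where "hh q x v = (pp q+2)*(1-x)/v"
definition cc :: "real \<Rightarrow> real \<Rightarrow> real \<Rightarrow> real" where "cc q x v = (pp q+1) * v / (hh q x v) powr (pp q+1)"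

context
  fixes q T t Lb Gb :: real
    and l :: "real \<Rightarrow> real \<Rightarrow> real \<Rightarrow> real" and g :: "real \<Rightarrow> real \<Rightarrow> real"
  assumes q: "q > 1" and t: "0 \<le> t" "t < T"
    and lc: "continuous_on (Xi \<times> {0..T}) (\<lambda>((x, v), s). l x v s)"
    and Lb: "\<And>x v s. x \<in> {-1..1} \<Longrightarrow> s \<in> {0..T} \<Longrightarrow> \<bar>l x v s\<bar> \<le> Lb"
    and Gb: "\<And>x v. x \<in> {-1..1} \<Longrightarrow> \<bar>g x v\<bar> \<le> Gb"
begin

lemma cost_set_bdd:
  "bdd_below {cost q l g T t \<xi> d\<xi> a | \<xi> d\<xi> a. adm q t T x v \<xi> d\<xi> a}"
proof (rule bdd_belowI)
  fix y assume "y \<in> {cost q l g T t \<xi> d\<xi> a | \<xi> d\<xi> a. adm q t T x v \<xi> d\<xi> a}"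
  then obtain \<xi> d\<xi> a where y: "y = cost q l g T t \<xi> d\<xi> a" and A: "adm q t T x v \<xi> d\<xi> a" by blast
  have W: "W2q_traj q t T \<xi> d\<xi> a" and rng: "\<forall>s\<in>{t..T}. \<xi> s \<in> {-1..1}"
    using A unfolding adm_def by blast+
  have "- Lb * (T - t) - Gb + (1/q) * (LINT s:{t..T}|lborel. \<bar>a s\<bar> powr q) \<le> y"
    unfolding y by (rule cost_lower[OF lc t(1) _ W rng Lb Gb]) (use t in auto)
  moreover have "0 \<le> (1/q) * (LINT s:{t..T}|lborel. \<bar>a s\<bar> powr q)"
    using q LINT_abs_powr_nonneg[of "{t..T}" a q] by simp
  ultimately show "- Lb * (T - t) - Gb \<le> y" by simp
qed

lemma value_le_cost:
  assumes "adm q t T x v \<xi> d\<xi> a"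
  shows "value_fun q l g T t x v \<le> cost q l g T t \<xi> d\<xi> a"
  unfolding value_fun_adm
  by (rule cInf_lower[OF _ cost_set_bdd]) (use assms in blast)


lemma pp_pos: "pp q > 0" using q by (simp add: pp_def)

lemma brake_traj:
  assumes x: "0 \<le> x" "x < 1" and v: "v > 0" and hT: "t + hh q x v \<le> T"
  shows "adm q t T x v (\<lambda>s. 1 + brk0 (pp q) (cc q x v) t (hh q x v) s) (\<lambda>s. 0 + brk1 (pp q) (cc q x v) t (hh q x v) s)
            (\<lambda>s. 0 + brk2 (pp q) (cc q x v) t (hh q x v) s)"
  by (rule construct(1)[OF q lc t(1) adm_const _ v pp_def hh_def cc_def hT _ Lb])
     (use q x in auto)

lemma E_KR:
  assumes x: "x < 1" and v: "v > 0"
  shows "cc q x v powr (q-1) * (1-x) / (q-1) = Kc q * (v powr (2*q-1) / (1-x) powr (q-1))"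
  unfolding Kc_def by (rule E_eq[OF q _ v pp_def hh_def cc_def]) (use x in simp)

lemma brake_cost_E:
  assumes x: "x < 1" and v: "v > 0"
  shows "(1/q) * (LINT s:{t..t + hh q x v}|lborel. \<bar>brk2 (pp q) (cc q x v) t (hh q x v) s\<bar> powr q)
          = Kc q * (v powr (2*q-1) / (1-x) powr (q-1))"
proof -
  have h0: "hh q x v > 0" using pp_pos x v by (simp add: hh_def)
  have c0: "cc q x v > 0" using pp_pos h0 v by (simp add: cc_def)
  have "(LINT s:{t..t + hh q x v}|lborel. \<bar>brk2 (pp q) (cc q x v) t (hh q x v) s\<bar> powr q)
      = cc q x v powr q * hh q x v powr (pp q+2) / (pp q+2)"
    by (rule brk_cost[OF q pp_def c0 h0])
  also have "\<dots> = cc q x v powr (q-1) * (pp q+1) * (1-x)"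
    by (rule brake_Z[OF q _ v pp_def hh_def cc_def]) (use x in simp)
  finally have "(1/q) * (LINT s:{t..t + hh q x v}|lborel. \<bar>brk2 (pp q) (cc q x v) t (hh q x v) s\<bar> powr q)
      = cc q x v powr (q-1) * (1-x) * ((pp q+1)/q)" by simp
  also have "(pp q+1)/q = 1/(q-1)" using q by (simp add: pp_def field_simps)
  finally show ?thesis using E_KR[OF x v] by simp
qed

lemma value_lower:
  assumes x: "0 \<le> x" "x < 1" and v: "v > 0" and hT: "t + hh q x v \<le> T"
  shows "value_fun q l g T t x v \<ge> - Lb * (T - t) - Gb + Kc q * (v powr (2*q-1) / (1-x) powr (q-1))"
  unfolding value_fun_adm
proof (rule cInf_greatest)
  show "{cost q l g T t \<xi> d\<xi> a | \<xi> d\<xi> a. adm q t T x v \<xi> d\<xi> a} \<noteq> {}"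
    using brake_traj[OF x v hT] by blast
  fix y assume "y \<in> {cost q l g T t \<xi> d\<xi> a | \<xi> d\<xi> a. adm q t T x v \<xi> d\<xi> a}"
  then obtain \<xi> d\<xi> a where y: "y = cost q l g T t \<xi> d\<xi> a" and A: "adm q t T x v \<xi> d\<xi> a" by blast
  have W: "W2q_traj q t T \<xi> d\<xi> a" and rng: "\<forall>s\<in>{t..T}. \<xi> s \<in> {-1..1}"
    and x0: "\<xi> t = x" and v0: "d\<xi> t = v"
    using A unfolding adm_def by blast+
  have "- Lb * (T - t) - Gb + (1/q) * (LINT s:{t..T}|lborel. \<bar>a s\<bar> powr q) \<le> y"
    unfolding y by (rule cost_lower[OF lc t(1) _ W rng Lb Gb]) (use t in auto)
  moreover have "(1/q) * (LINT s:{t..T}|lborel. \<bar>a s\<bar> powr q) \<ge> cc q x v powr (q-1) * (1-x) / (q-1)"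
    by (rule lower_accel[OF q W x0 v0 _ x(2) v pp_def hh_def cc_def hT]) (use rng in auto)
  ultimately show "- Lb * (T - t) - Gb + Kc q * (v powr (2*q-1) / (1-x) powr (q-1)) \<le> y"
    using E_KR[OF x(2) v] by simp
qed

lemma value_upper:
  assumes x: "0 \<le> x" "x < 1" and v: "v > 0" and hT: "t + hh q x v \<le> T"
  shows "value_fun q l g T t x v \<le> Lb * (T - t) + Gb + Kc q * (v powr (2*q-1) / (1-x) powr (q-1))"
proof -
  note A = brake_traj[OF x v hT]
  have W: "W2q_traj q t T (\<lambda>s. 1 + brk0 (pp q) (cc q x v) t (hh q x v) s) (\<lambda>s. 0 + brk1 (pp q) (cc q x v) t (hh q x v) s)
            (\<lambda>s. 0 + brk2 (pp q) (cc q x v) t (hh q x v) s)"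
    and rng: "\<forall>s\<in>{t..T}. 1 + brk0 (pp q) (cc q x v) t (hh q x v) s \<in> {-1..1}"
    using A unfolding adm_def by blast+
  have "value_fun q l g T t x v \<le> cost q l g T t (\<lambda>s. 1 + brk0 (pp q) (cc q x v) t (hh q x v) s) (\<lambda>s. 0 + brk1 (pp q) (cc q x v) t (hh q x v) s)
            (\<lambda>s. 0 + brk2 (pp q) (cc q x v) t (hh q x v) s)"
    by (rule value_le_cost[OF A])
  also have "\<dots> \<le> Lb * (T - t) + Gb + (1/q) * (LINT s:{t..T}|lborel. \<bar>0 + brk2 (pp q) (cc q x v) t (hh q x v) s\<bar> powr q)"
    by (rule cost_upper[OF lc t(1) _ W rng Lb Gb]) (use t in auto)
  also have "(LINT s:{t..T}|lborel. \<bar>0 + brk2 (pp q) (cc q x v) t (hh q x v) s\<bar> powr q)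
      = (LINT s:{t..t + hh q x v}|lborel. \<bar>brk2 (pp q) (cc q x v) t (hh q x v) s\<bar> powr q)"
  proof -
    have "(LINT s:{t..T}|lborel. \<bar>0 + brk2 (pp q) (cc q x v) t (hh q x v) s\<bar> powr q)
      = (LINT s:{t..T}|lborel. \<bar>brk2 (pp q) (cc q x v) t (hh q x v) s\<bar> powr q)" by simp
    also have "\<dots> = (LINT s:{t..t + hh q x v}|lborel. \<bar>brk2 (pp q) (cc q x v) t (hh q x v) s\<bar> powr q)"
      by (rule set_integral_restrict) (use hT brk_after(3)[OF _ pp_pos] in auto)
    finally show ?thesis .
  qed
  finally show ?thesis using brake_cost_E[OF x(2) v] by simp
qed

lemma part2_point:
  assumes Aeta: "adm q t T 1 0 \<eta> d\<eta> b" and th: "0 < th" "th < 1"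
    and x: "0 \<le> x" "x < 1" and v: "v > 0" and hT: "t + hh q x v \<le> T"
    and pos: "\<And>s. s \<in> {t..t + hh q x v} \<Longrightarrow> \<eta> s \<ge> 0"
  shows "value_fun q l g T t x v \<le> cost q l g T t \<eta> d\<eta> b + 2 * Lb * hh q x v
           + th powr (1-q) * (Kc q * (v powr (2*q-1) / (1-x) powr (q-1)))
           + ((1-th) powr (1-q) - 1) * ((1/q) * (LINT s:{t..t + hh q x v}|lborel. \<bar>b s\<bar> powr q))"
proof -
  let ?h = "hh q x v" and ?c = "cc q x v"
  have low: "\<And>s. s \<in> {t..t + ?h} \<Longrightarrow> \<eta> s - (1-x) \<ge> -1" using pos x by force
  note C = construct[OF q lc t(1) Aeta x(2) v pp_def hh_def cc_def hT low Lb]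
  have Wb: "W2q_traj q t T \<eta> d\<eta> b" using Aeta unfolding adm_def by blast
  have Wa: "W2q_traj q t T (\<lambda>s. \<eta> s + brk0 (pp q) ?c t ?h s) (\<lambda>s. d\<eta> s + brk1 (pp q) ?c t ?h s) (\<lambda>s. b s + brk2 (pp q) ?c t ?h s)"
    using C(1) unfolding adm_def by blast
  have subh: "{t..t + ?h} \<subseteq> {t..T}" using hT by auto
  have i1: "set_integrable lborel {t..t + ?h} (\<lambda>s. \<bar>b s + brk2 (pp q) ?c t ?h s\<bar> powr q)"
    by (rule set_integrable_subset[OF W2q_D(2)[OF Wa] _ subh]) simp
  have i2: "set_integrable lborel {t..t + ?h} (\<lambda>s. \<bar>b s\<bar> powr q)"
    by (rule set_integrable_subset[OF W2q_D(2)[OF Wb] _ subh]) simp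
  have i3: "set_integrable lborel {t..t + ?h} (\<lambda>s. \<bar>brk2 (pp q) ?c t ?h s\<bar> powr q)"
    by (rule borel_integrable_atLeastAtMost') (intro continuous_intros continuous_on_powr' brk2_cont pp_pos, use q in auto)
  have "(LINT s:{t..t + ?h}|lborel. \<bar>b s + brk2 (pp q) ?c t ?h s\<bar> powr q - \<bar>b s\<bar> powr q)
      \<le> (LINT s:{t..t + ?h}|lborel. th powr (1-q) * \<bar>brk2 (pp q) ?c t ?h s\<bar> powr q + ((1-th) powr (1-q) - 1) * \<bar>b s\<bar> powr q)"
  proof (rule set_integral_mono)
    show "set_integrable lborel {t..t + ?h} (\<lambda>s. \<bar>b s + brk2 (pp q) ?c t ?h s\<bar> powr q - \<bar>b s\<bar> powr q)"
      by (rule set_integral_diff(1)[OF i1 i2])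
    show "set_integrable lborel {t..t + ?h} (\<lambda>s. th powr (1-q) * \<bar>brk2 (pp q) ?c t ?h s\<bar> powr q + ((1-th) powr (1-q) - 1) * \<bar>b s\<bar> powr q)"
      by (intro set_integral_add(1) set_integrable_mult_right i2 i3)
    fix s
    have "\<bar>b s + brk2 (pp q) ?c t ?h s\<bar> powr q \<le> th powr (1-q) * \<bar>brk2 (pp q) ?c t ?h s\<bar> powr q + (1-th) powr (1-q) * \<bar>b s\<bar> powr q"
      by (rule abs_powr_sum_le) (use q th in auto)
    then show "\<bar>b s + brk2 (pp q) ?c t ?h s\<bar> powr q - \<bar>b s\<bar> powr q \<le> th powr (1-q) * \<bar>brk2 (pp q) ?c t ?h s\<bar> powr q + ((1-th) powr (1-q) - 1) * \<bar>b s\<bar> powr q"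
      by (simp add: algebra_simps)
  qed
  also have "\<dots> = th powr (1-q) * (LINT s:{t..t + ?h}|lborel. \<bar>brk2 (pp q) ?c t ?h s\<bar> powr q)
      + ((1-th) powr (1-q) - 1) * (LINT s:{t..t + ?h}|lborel. \<bar>b s\<bar> powr q)"
    apply (subst set_integral_add(2))
      apply (rule set_integrable_mult_right, rule i3)
     apply (rule set_integrable_mult_right, rule i2)
    apply (simp only: set_integral_mult_right)
    done
  finally have D0: "(LINT s:{t..t + ?h}|lborel. \<bar>b s + brk2 (pp q) ?c t ?h s\<bar> powr q - \<bar>b s\<bar> powr q)
      \<le> th powr (1-q) * (LINT s:{t..t + ?h}|lborel. \<bar>brk2 (pp q) ?c t ?h s\<bar> powr q)
      + ((1-th) powr (1-q) - 1) * (LINT s:{t..t + ?h}|lborel. \<bar>b s\<bar> powr q)" .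
  have D: "(1/q) * (LINT s:{t..t + ?h}|lborel. \<bar>b s + brk2 (pp q) ?c t ?h s\<bar> powr q - \<bar>b s\<bar> powr q)
      \<le> th powr (1-q) * ((1/q) * (LINT s:{t..t + ?h}|lborel. \<bar>brk2 (pp q) ?c t ?h s\<bar> powr q))
      + ((1-th) powr (1-q) - 1) * ((1/q) * (LINT s:{t..t + ?h}|lborel. \<bar>b s\<bar> powr q))"
    using divide_right_mono[OF D0, of q] q by (simp add: add_divide_distrib)
  have "value_fun q l g T t x v \<le> cost q l g T t (\<lambda>s. \<eta> s + brk0 (pp q) ?c t ?h s) (\<lambda>s. d\<eta> s + brk1 (pp q) ?c t ?h s) (\<lambda>s. b s + brk2 (pp q) ?c t ?h s)"
    by (rule value_le_cost[OF C(1)])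
  also have "\<dots> \<le> cost q l g T t \<eta> d\<eta> b + 2 * Lb * ?h
           + (1/q) * (LINT s:{t..t + ?h}|lborel. \<bar>b s + brk2 (pp q) ?c t ?h s\<bar> powr q - \<bar>b s\<bar> powr q)"
    by (rule C(2))
  finally have U: "value_fun q l g T t x v \<le> cost q l g T t \<eta> d\<eta> b + 2 * Lb * ?h
           + (1/q) * (LINT s:{t..t + ?h}|lborel. \<bar>b s + brk2 (pp q) ?c t ?h s\<bar> powr q - \<bar>b s\<bar> powr q)" .
  show ?thesis using U D[unfolded brake_cost_E[OF x(2) v]] by linarith
qed

end

lemma v_ge_kd:
  fixes q d v k :: real
  assumes q: "q > 1" and d: "0 < d" "d \<le> 1" and v: "v > 0" and k: "k > 0"
    and R: "k powr (2*q-1) < v powr (2*q-1) / d powr (q-1)"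
  shows "k * d \<le> v"
proof (rule ccontr)
  assume "\<not> k * d \<le> v"
  then have lt: "v < k * d" by simp
  have "v powr (2*q-1) \<le> (k * d) powr (2*q-1)"
    using lt v q by (intro powr_mono2) auto
  also have "\<dots> = k powr (2*q-1) * d powr (2*q-1)"
    using k d by (simp add: powr_mult)
  also have "d powr (2*q-1) = d powr (q-1) * d powr q"
  proof -
    have e1: "d powr (q-1) * d powr q = d powr ((q-1)+q)" by (rule powr_add[symmetric])
    have e2: "d powr (2*q-1) = d powr ((q-1)+q)"
      by (rule arg_cong[where f="\<lambda>e. d powr e"]) simp
    show ?thesis unfolding e2 e1[symmetric] ..
  qed
  finally have "v powr (2*q-1) / d powr (q-1) \<le> k powr (2*q-1) * d powr q"
    using d by (simp add: divide_le_eq mult_ac)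
  also have "\<dots> \<le> k powr (2*q-1) * 1"
    using d q by (intro mult_left_mono powr_le1) auto
  finally show False using R by simp
qed

lemma ev_inf3:
  assumes "eventually P1 A" "eventually P2 B" "eventually P3 C"
    and "\<And>z. P1 z \<Longrightarrow> P2 z \<Longrightarrow> P3 z \<Longrightarrow> Q z"
  shows "eventually Q (inf A (inf B C))"
proof -
  have 1: "eventually P1 (inf A (inf B C))" by (rule filter_leD[OF inf_le1 assms(1)])
  have 2: "eventually P2 (inf A (inf B C))"
    by (rule filter_leD[OF order_trans[OF inf_le2 inf_le1] assms(2)])
  have 3: "eventually P3 (inf A (inf B C))"
    by (rule filter_leD[OF order_trans[OF inf_le2 inf_le2] assms(3)])
  show ?thesis using eventually_conj[OF 1 eventually_conj[OF 2 3]]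
    by (rule eventually_mono) (use assms(4) in blast)
qed


lemma bounds_from_bdd:
  fixes l :: "real \<Rightarrow> real \<Rightarrow> real \<Rightarrow> real" and g :: "real \<Rightarrow> real \<Rightarrow> real"
  assumes l_bdd: "bounded ((\<lambda>((x, v), s). l x v s) ` (Xi \<times> {0..T}))"
    and g_bdd: "bounded ((\<lambda>(x, v). g x v) ` Xi)"
  obtains Lb Gb where "\<And>x v s. x \<in> {-1..1} \<Longrightarrow> s \<in> {0..T} \<Longrightarrow> \<bar>l x v s\<bar> \<le> Lb"
    and "\<And>x v. x \<in> {-1..1} \<Longrightarrow> \<bar>g x v\<bar> \<le> Gb"
proof -
  from l_bdd obtain B1 where B1: "\<forall>y\<in>(\<lambda>((x, v), s). l x v s) ` (Xi \<times> {0..T}). norm y \<le> B1"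
    unfolding bounded_iff by blast
  from g_bdd obtain B2 where B2: "\<forall>y\<in>(\<lambda>(x, v). g x v) ` Xi. norm y \<le> B2"
    unfolding bounded_iff by blast
  show ?thesis
  proof (rule that)
    fix x v s :: real assume xs: "x \<in> {-1..1}" "s \<in> {0..T}"
    then have "((x,v),s) \<in> Xi \<times> {0..T}" by (simp add: Xi_def)
    then have "l x v s \<in> (\<lambda>((x, v), s). l x v s) ` (Xi \<times> {0..T})" by force
    then show "\<bar>l x v s\<bar> \<le> B1" using B1 by fastforce
  next
    fix x v :: real assume "x \<in> {-1..1}"
    then have "(x,v) \<in> Xi" by (simp add: Xi_def)
    then have "g x v \<in> (\<lambda>(x, v). g x v) ` Xi" by force
    then show "\<bar>g x v\<bar> \<le> B2" using B2 by fastforce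
  qed
qed

lemma hT_of:
  fixes q T t x v :: real
  assumes q: "q > 1" and t: "t < T" and x: "0 \<le> x" "x < 1" and v: "v > 0"
    and R: "((pp q + 2)/(T - t)) powr (2*q-1) < v powr (2*q-1) / (1-x) powr (q-1)"
  shows "t + hh q x v \<le> T"
proof -
  have pp0: "pp q > 0" using q by (simp add: pp_def)
  define k where "k = (pp q + 2)/(T - t)"
  have k0: "k > 0" using pp0 t by (simp add: k_def)
  have kd: "k * (1-x) \<le> v"
    by (rule v_ge_kd[OF q _ _ v k0]) (use x R in \<open>auto simp: k_def\<close>)
  have "hh q x v * v = (pp q + 2) * (1-x)" using v by (simp add: hh_def)
  also have "\<dots> = (T - t) * (k * (1-x))" using t by (simp add: k_def)
  also have "\<dots> \<le> (T - t) * v" using kd t by (intro mult_left_mono) auto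
  finally have "hh q x v \<le> T - t" using v by simp
  then show ?thesis by simp
qed


lemma part1:
  fixes q T t :: real
    and l :: "real \<Rightarrow> real \<Rightarrow> real \<Rightarrow> real" and g :: "real \<Rightarrow> real \<Rightarrow> real"
  assumes q: "q > 1" and t: "0 \<le> t" "t < T"
    and lc: "continuous_on (Xi \<times> {0..T}) (\<lambda>((x, v), s). l x v s)"
    and Lb: "\<And>x v s. x \<in> {-1..1} \<Longrightarrow> s \<in> {0..T} \<Longrightarrow> \<bar>l x v s\<bar> \<le> Lb"
    and Gb: "\<And>x v. x \<in> {-1..1} \<Longrightarrow> \<bar>g x v\<bar> \<le> Gb"
  shows "((\<lambda>(x, v). value_fun q l g T t x v)
       \<sim>[inf (filtercomap fst (at_left 1))
          (inf (principal {p. snd p > 0})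
               (filtercomap (\<lambda>(x, v). v powr (2*q - 1) / (1 - x) powr (q - 1)) at_top))]
     (\<lambda>(x, v). q powr (q - 1) / (2*q - 1) powr q * (v powr (2*q - 1) / (1 - x) powr (q - 1))))"
proof -
  define R where "R = (\<lambda>(x::real, v::real). v powr (2*q - 1) / (1 - x) powr (q - 1))"
  define F1 where "F1 = inf (filtercomap fst (at_left (1::real)))
          (inf (principal {p::real\<times>real. snd p > 0}) (filtercomap R at_top))"
  define f where "f = (\<lambda>(x, v). value_fun q l g T t x v)"
  define gK where "gK = (\<lambda>z. Kc q * R z)"
  have gK_eq: "(\<lambda>(x, v). q powr (q - 1) / (2*q - 1) powr q * (v powr (2*q - 1) / (1 - x) powr (q - 1))) = gK"
    by (auto simp: gK_def R_def Kc_def fun_eq_iff)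
  have Kc0: "Kc q > 0" using q by (simp add: Kc_def)
  define B where "B = Lb * (T - t) + Gb"
  have ev1: "eventually (\<lambda>z. fst z \<in> {0<..<1} \<and> snd z > 0 \<and> ((pp q + 2)/(T - t)) powr (2*q-1) < R z) F1"
    unfolding F1_def
  proof (rule ev_inf3)
    show "eventually (\<lambda>z. fst z \<in> {0<..<1}) (filtercomap fst (at_left (1::real)))"
      by (rule eventually_filtercomapI) (rule eventually_at_left_real, simp)
    show "eventually (\<lambda>z. snd z > 0) (principal {p::real\<times>real. snd p > 0})"
      by (simp add: eventually_principal)
    show "eventually (\<lambda>z. ((pp q + 2)/(T - t)) powr (2*q-1) < R z) (filtercomap R at_top)"
      by (rule eventually_filtercomapI) (rule eventually_gt_at_top)
  qed auto
  have bnd: "eventually (\<lambda>z. \<bar>f z - gK z\<bar> \<le> B) F1"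
    using ev1
  proof (rule eventually_mono)
    fix z assume H: "fst z \<in> {0<..<1} \<and> snd z > 0 \<and> ((pp q + 2)/(T - t)) powr (2*q-1) < R z"
    obtain x v where z: "z = (x, v)" by force
    have x: "0 \<le> x" "x < 1" and v: "v > 0" using H z by auto
    have RR: "((pp q + 2)/(T - t)) powr (2*q-1) < v powr (2*q-1) / (1-x) powr (q-1)"
      using H z by (simp add: R_def)
    have hT: "t + hh q x v \<le> T" by (rule hT_of[OF q t(2) x v RR])
    have "value_fun q l g T t x v \<ge> - Lb * (T - t) - Gb + Kc q * (v powr (2*q-1) / (1-x) powr (q-1))"
      by (rule value_lower[OF q t lc Lb Gb x v hT])
    moreover have "value_fun q l g T t x v \<le> Lb * (T - t) + Gb + Kc q * (v powr (2*q-1) / (1-x) powr (q-1))"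
      by (rule value_upper[OF q t lc Lb Gb x v hT])
    ultimately show "\<bar>f z - gK z\<bar> \<le> B"
      unfolding z f_def gK_def R_def B_def by simp
  qed
  have Rlim: "filterlim R at_top F1"
    by (rule filterlim_mono[OF filterlim_filtercomap order_refl])
       (unfold F1_def, intro order_trans[OF inf_le2 inf_le2])
  have gto: "filterlim gK at_top F1"
    unfolding gK_def by (rule filterlim_tendsto_pos_mult_at_top[OF tendsto_const Kc0 Rlim])
  have gpos: "eventually (\<lambda>z. gK z > 0) F1"
    using gto unfolding filterlim_at_top_dense by blast
  have lim0: "((\<lambda>z. (f z - gK z) / gK z) \<longlongrightarrow> 0) F1"
  proof (rule Lim_null_comparison)
    show "eventually (\<lambda>z. norm ((f z - gK z) / gK z) \<le> B / gK z) F1"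
      using bnd gpos
    proof eventually_elim
      case (elim z)
      then show ?case by (simp add: abs_divide divide_right_mono)
    qed
    show "((\<lambda>z. B / gK z) \<longlongrightarrow> 0) F1"
      by (rule tendsto_divide_0[OF tendsto_const filterlim_at_top_imp_at_infinity[OF gto]])
  qed
  have "((\<lambda>z. 1 + (f z - gK z) / gK z) \<longlongrightarrow> 1 + 0) F1"
    by (intro tendsto_add tendsto_const lim0)
  then have "((\<lambda>z. 1 + (f z - gK z) / gK z) \<longlongrightarrow> 1) F1" by simp
  moreover have "eventually (\<lambda>z. 1 + (f z - gK z) / gK z = f z / gK z) F1"
    using gpos by eventually_elim (simp add: field_simps)
  ultimately have "((\<lambda>z. f z / gK z) \<longlongrightarrow> 1) F1"
    by (rule Lim_transform_eventually)
  then have "f \<sim>[F1] gK" by (rule asymp_equivI')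
  then show ?thesis unfolding gK_eq f_def F1_def R_def .
qed


lemma part2:
  fixes q T t C :: real
    and l :: "real \<Rightarrow> real \<Rightarrow> real \<Rightarrow> real" and g :: "real \<Rightarrow> real \<Rightarrow> real"
  assumes q: "q > 1" and t: "0 \<le> t" "t < T"
    and lc: "continuous_on (Xi \<times> {0..T}) (\<lambda>((x, v), s). l x v s)"
    and Lb: "\<And>x v s. x \<in> {-1..1} \<Longrightarrow> s \<in> {0..T} \<Longrightarrow> \<bar>l x v s\<bar> \<le> Lb"
    and Gb: "\<And>x v. x \<in> {-1..1} \<Longrightarrow> \<bar>g x v\<bar> \<le> Gb"
    and C: "C > 0"
  shows "\<forall>\<epsilon>>0. eventually
       (\<lambda>(x, v). value_fun q l g T t x v
          \<le> q powr (q - 1) / (2*q - 1) powr q * (v powr (2*q - 1) / (1 - x) powr (q - 1))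
            + value_fun q l g T t 1 0 + \<epsilon>)
       (inf (filtercomap fst (at_left 1))
          (inf (principal {(x, v). v > 0 \<and> v powr (2*q - 1) / (1 - x) powr (q - 1) < C})
               (filtercomap (\<lambda>(x, v). v * (T - t) / (1 - x)) at_top)))"
proof (intro allI impI)
  fix \<epsilon> :: real assume e: "\<epsilon> > 0"
  have Kc0: "Kc q > 0" using q by (simp add: Kc_def)
  define u10 where "u10 = value_fun q l g T t 1 0"
  define SS where "SS = {cost q l g T t \<xi> d\<xi> a | \<xi> d\<xi> a. adm q t T 1 0 \<xi> d\<xi> a}"
  have "cost q l g T t (\<lambda>_. 1) (\<lambda>_. 0) (\<lambda>_. 0) \<in> SS"
    unfolding SS_def
  proof (rule CollectI, intro exI conjI refl)
    show "adm q t T 1 0 (\<lambda>_. 1) (\<lambda>_. 0) (\<lambda>_. 0)" by (rule adm_const) (use q in simp)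
  qed simp
  then have SSne: "SS \<noteq> {}" by blast
  have "Inf SS < u10 + \<epsilon>/3" unfolding u10_def value_fun_adm SS_def using e by simp
  then obtain y where "y \<in> SS" "y < u10 + \<epsilon>/3" using cInf_lessD[OF SSne] by blast
  then obtain \<eta> d\<eta> b where Aeta: "adm q t T 1 0 \<eta> d\<eta> b"
    and ceta: "cost q l g T t \<eta> d\<eta> b < u10 + \<epsilon>/3"
    unfolding SS_def by blast
  have Weta: "W2q_traj q t T \<eta> d\<eta> b" and eta1: "\<eta> t = 1" using Aeta unfolding adm_def by blast+
  define e' where "e' = \<epsilon> / (3 * Kc q * C)"
  have e'0: "e' > 0" using e Kc0 C by (simp add: e'_def)
  define th where "th = (1 + e') powr (1/(1-q))"
  have th0: "th > 0" using e'0 by (simp add: th_def)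
  have th1: "th < 1" unfolding th_def by (rule powr_less_one) (use e'0 q in auto)
  have thq: "th powr (1-q) = 1 + e'"
    unfolding th_def using e'0 q by (simp add: powr_powr)
  define c' where "c' = (1-th) powr (1-q) - 1"
  define fb where "fb r = \<bar>b r\<bar> powr q" for r
  have fbi: "fb integrable_on {t..T}"
    unfolding fb_def by (rule set_borel_integral_eq_integral(1)[OF W2q_D(2)[OF Weta]])
  have cI: "continuous_on {t..T} (\<lambda>s. integral {t..s} fb)"
    by (rule indefinite_integral_continuous_1[OF fbi])
  define e1 where "e1 = \<epsilon> * q / (6 * (\<bar>c'\<bar> + 1))"
  have e10: "e1 > 0" using e q by (simp add: e1_def add_pos_nonneg)
  have tin: "t \<in> {t..T}" using t by auto
  obtain d1 where d1: "d1 > 0" and d1P': "\<forall>s\<in>{t..T}. dist s t < d1 \<longrightarrow> dist (integral {t..s} fb) (integral {t..t} fb) < e1"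
    using cI[unfolded continuous_on_iff, rule_format, OF tin e10] by blast
  have d1P: "\<And>s. s \<in> {t..T} \<Longrightarrow> dist s t < d1 \<Longrightarrow> dist (integral {t..s} fb) (integral {t..t} fb) < e1"
    using d1P' by blast
  have ceta_cont: "continuous_on {t..T} \<eta>" by (rule W2q_cont(1)[OF Weta])
  obtain d2 where d2: "d2 > 0" and d2P': "\<forall>s\<in>{t..T}. dist s t < d2 \<longrightarrow> dist (\<eta> s) (\<eta> t) < 1"
    using ceta_cont[unfolded continuous_on_iff, rule_format, OF tin zero_less_one] by blast
  have d2P: "\<And>s. s \<in> {t..T} \<Longrightarrow> dist s t < d2 \<Longrightarrow> dist (\<eta> s) (\<eta> t) < 1"
    using d2P' by blast
  define \<delta> where "\<delta> = min (min d1 d2) (min (T - t) (\<epsilon> / (12 * (\<bar>Lb\<bar> + 1))))"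
  have \<delta>0: "\<delta> > 0" using d1 d2 t e by (simp add: \<delta>_def add_pos_nonneg)
  define M where "M = (pp q + 2) * (T - t) / \<delta>"
  have pp0: "pp q > 0" using q by (simp add: pp_def)
  have M0: "M > 0" using pp0 t \<delta>0 by (simp add: M_def)
  show "eventually
       (\<lambda>(x, v). value_fun q l g T t x v
          \<le> q powr (q - 1) / (2*q - 1) powr q * (v powr (2*q - 1) / (1 - x) powr (q - 1))
            + value_fun q l g T t 1 0 + \<epsilon>)
       (inf (filtercomap fst (at_left 1))
          (inf (principal {(x, v). v > 0 \<and> v powr (2*q - 1) / (1 - x) powr (q - 1) < C})
               (filtercomap (\<lambda>(x, v). v * (T - t) / (1 - x)) at_top)))"
  proof (rule ev_inf3)
    show "eventually (\<lambda>z. fst z \<in> {0<..<1}) (filtercomap fst (at_left (1::real)))"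
      by (rule eventually_filtercomapI) (rule eventually_at_left_real, simp)
    show "eventually (\<lambda>z. z \<in> {(x, v). v > 0 \<and> v powr (2*q - 1) / (1 - x) powr (q - 1) < C})
       (principal {(x, v). v > 0 \<and> v powr (2*q - 1) / (1 - x) powr (q - 1) < C})"
      by (simp add: eventually_principal)
    show "eventually (\<lambda>z. M < (\<lambda>(x, v). v * (T - t) / (1 - x)) z) (filtercomap (\<lambda>(x, v). v * (T - t) / (1 - x)) at_top)"
      by (rule eventually_filtercomapI) (rule eventually_gt_at_top)
  next
    fix z :: "real \<times> real"
    assume H1: "fst z \<in> {0<..<1}"
      and H2: "z \<in> {(x, v). v > 0 \<and> v powr (2*q - 1) / (1 - x) powr (q - 1) < C}"
      and H3: "M < (\<lambda>(x, v). v * (T - t) / (1 - x)) z"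
    obtain x v where z: "z = (x, v)" by force
    have x: "0 \<le> x" "x < 1" and v: "v > 0" and RC: "v powr (2*q - 1) / (1 - x) powr (q - 1) < C"
      and MG: "M < v * (T - t) / (1 - x)" using H1 H2 H3 z by auto
    define h where "h = hh q x v"
    have h0: "h > 0" using pp0 x v by (simp add: h_def hh_def)
    have "h * (v * (T - t) / (1 - x)) = (pp q + 2) * (T - t)"
      using x v by (simp add: h_def hh_def field_simps)
    also have "\<dots> = M * \<delta>" using \<delta>0 by (simp add: M_def)
    also have "\<dots> < (v * (T - t) / (1 - x)) * \<delta>" by (rule mult_strict_right_mono[OF MG \<delta>0])
    finally have hG: "h * (v * (T - t) / (1 - x)) < (v * (T - t) / (1 - x)) * \<delta>" .
    have G0: "v * (T - t) / (1 - x) > 0" using MG M0 by linarith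
    have hd: "h < \<delta>"
    proof (rule ccontr)
      assume "\<not> h < \<delta>"
      then have "\<delta> * (v * (T - t) / (1 - x)) \<le> h * (v * (T - t) / (1 - x))"
        using G0 by (intro mult_right_mono) auto
      then show False using hG by (simp add: mult.commute)
    qed
    have hT: "t + hh q x v \<le> T" using hd unfolding h_def \<delta>_def by linarith
    have pos: "\<And>s. s \<in> {t..t + hh q x v} \<Longrightarrow> \<eta> s \<ge> 0"
    proof -
      fix s assume s: "s \<in> {t..t + hh q x v}"
      then have sT: "s \<in> {t..T}" using hT by auto
      have "dist s t < d2" using s hd unfolding h_def \<delta>_def dist_real_def by auto
      then have "dist (\<eta> s) (\<eta> t) < 1" using d2P[OF sT] by simp
      then show "\<eta> s \<ge> 0" using eta1 by (simp add: dist_real_def)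
    qed
    note P = part2_point[where g=g and Gb=Gb and Lb=Lb and l=l, OF q t lc Lb Gb Aeta th0 th1 x v hT pos]
    have sI: "t + h \<in> {t..T}" using hT h0 unfolding h_def by auto
    have Ieq: "(LINT s:{t..t + h}|lborel. \<bar>b s\<bar> powr q) = integral {t..t+h} fb"
      unfolding fb_def by (rule LINT_eq_integral_sub[OF W2q_D(2)[OF Weta] sI])
    have I0: "0 \<le> (LINT s:{t..t + h}|lborel. \<bar>b s\<bar> powr q)" by (rule LINT_abs_powr_nonneg)
    have "dist (integral {t..t+h} fb) (integral {t..t} fb) < e1"
      using d1P[OF sI] hd h0 unfolding \<delta>_def dist_real_def by auto
    then have Ie1: "(LINT s:{t..t + h}|lborel. \<bar>b s\<bar> powr q) < e1"
      using Ieq I0 by (simp add: dist_real_def)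
    have T1: "c' * ((1/q) * (LINT s:{t..t + h}|lborel. \<bar>b s\<bar> powr q)) \<le> \<epsilon>/6"
    proof -
      have "c' * ((1/q) * (LINT s:{t..t + h}|lborel. \<bar>b s\<bar> powr q)) \<le> \<bar>c'\<bar> * ((1/q) * (LINT s:{t..t + h}|lborel. \<bar>b s\<bar> powr q))"
        using I0 q by (intro mult_right_mono) auto
      also have "\<dots> \<le> \<bar>c'\<bar> * ((1/q) * e1)"
        using Ie1 q by (intro mult_left_mono) auto
      also have "\<dots> = \<epsilon> / 6 * (\<bar>c'\<bar> / (\<bar>c'\<bar> + 1))"
        using q by (simp add: e1_def field_simps)
      also have "\<dots> \<le> \<epsilon> / 6 * 1"
        using e by (intro mult_left_mono) auto
      finally show ?thesis by simp
    qed
    have T2: "2 * Lb * h \<le> \<epsilon>/6"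
    proof -
      have "2 * Lb * h \<le> 2 * \<bar>Lb\<bar> * h" using h0 by (intro mult_right_mono) auto
      also have "\<dots> \<le> 2 * \<bar>Lb\<bar> * \<delta>" using hd by (intro mult_left_mono) auto
      also have "\<dots> \<le> 2 * \<bar>Lb\<bar> * (\<epsilon> / (12 * (\<bar>Lb\<bar> + 1)))"
        unfolding \<delta>_def by (intro mult_left_mono) auto
      also have "\<dots> = \<epsilon> / 6 * (\<bar>Lb\<bar> / (\<bar>Lb\<bar> + 1))" by (simp add: field_simps)
      also have "\<dots> \<le> \<epsilon> / 6 * 1" using e by (intro mult_left_mono) auto
      finally show ?thesis by simp
    qed
    define KR where "KR = Kc q * (v powr (2*q-1) / (1-x) powr (q-1))"
    have T3: "th powr (1-q) * KR \<le> KR + \<epsilon>/3"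
    proof -
      have "th powr (1-q) * KR = KR + e' * KR" unfolding thq by (simp add: algebra_simps)
      also have "e' * KR \<le> e' * (Kc q * C)"
        unfolding KR_def using RC Kc0 e'0 by (intro mult_left_mono) auto
      also have "e' * (Kc q * C) = \<epsilon>/3" using Kc0 C by (simp add: e'_def)
      finally show ?thesis by simp
    qed
    have "value_fun q l g T t x v \<le> KR + u10 + \<epsilon>"
      using P ceta T1 T2 T3 unfolding h_def[symmetric] c'_def[symmetric] KR_def[symmetric] by linarith
    then show "(\<lambda>(x, v). value_fun q l g T t x v
          \<le> q powr (q - 1) / (2*q - 1) powr q * (v powr (2*q - 1) / (1 - x) powr (q - 1))
            + value_fun q l g T t 1 0 + \<epsilon>) z"
      unfolding z KR_def u10_def Kc_def by simp
  qed
qed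

theorem proposition3p2:
  fixes q T t C :: real
    and l :: "real \<Rightarrow> real \<Rightarrow> real \<Rightarrow> real" and g :: "real \<Rightarrow> real \<Rightarrow> real"
  assumes q: "q > 1" and T: "T > 0" and t: "0 \<le> t" "t < T"
    and l_cont: "continuous_on (Xi \<times> {0..T}) (\<lambda>((x, v), s). l x v s)"
    and l_bdd: "bounded ((\<lambda>((x, v), s). l x v s) ` (Xi \<times> {0..T}))"
    and g_cont: "continuous_on Xi (\<lambda>(x, v). g x v)"
    and g_bdd: "bounded ((\<lambda>(x, v). g x v) ` Xi)"
    and C: "C > 0"
  shows
    "((\<lambda>(x, v). value_fun q l g T t x v)
       \<sim>[inf (filtercomap fst (at_left 1))
          (inf (principal {p. snd p > 0})
               (filtercomap (\<lambda>(x, v). v powr (2*q - 1) / (1 - x) powr (q - 1)) at_top))]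
     (\<lambda>(x, v). q powr (q - 1) / (2*q - 1) powr q * (v powr (2*q - 1) / (1 - x) powr (q - 1))))
   \<and>
    (\<forall>\<epsilon>>0. eventually
       (\<lambda>(x, v). value_fun q l g T t x v
          \<le> q powr (q - 1) / (2*q - 1) powr q * (v powr (2*q - 1) / (1 - x) powr (q - 1))
            + value_fun q l g T t 1 0 + \<epsilon>)
       (inf (filtercomap fst (at_left 1))
          (inf (principal {(x, v). v > 0 \<and> v powr (2*q - 1) / (1 - x) powr (q - 1) < C})
               (filtercomap (\<lambda>(x, v). v * (T - t) / (1 - x)) at_top))))"
  proof -
  obtain Lb Gb where Lb: "\<And>x v s. x \<in> {-1..1} \<Longrightarrow> s \<in> {0..T} \<Longrightarrow> \<bar>l x v s\<bar> \<le> Lb"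
    and Gb: "\<And>x v. x \<in> {-1..1} \<Longrightarrow> \<bar>g x v\<bar> \<le> Gb"
    using bounds_from_bdd[OF l_bdd g_bdd] by blast
  show ?thesis
    by (rule conjI[OF part1[OF q t l_cont Lb Gb] part2[OF q t l_cont Lb Gb C]])
qed

end
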